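(* Consider the FlexGT/Acc-FlexGT recursion in the context, and suppose (S), (V), (G) hold. If $$\gamma\le\min\left\{\frac{1}{4\beta L},\frac{1-\bar\rho_W}{14\beta L\sqrt{\bar\rho_W}}\right\},$$ then for all $K\ge1$, $$\frac1K\sum_{k=0}^{K-1}\mathbb{E}\|\tilde{\mathbf y}_{\beta k}\|^2\le\frac{4\mathbb{E}\|\tilde{\mathbf y}_0\|^2}{(1-\bar\rho_W)K}+\frac{24n\sigma^2}{1-\bar\rho_W}+\frac{96\bar\rho_WL^2}{(1-\bar\rho_W)^2}\frac1K\sum_{k=0}^{K-1}\mathbb{E}\|\tilde{\mathbf x}_{\beta k}\|^2+\frac{384n\gamma^2\beta^2L^2\bar\rho_W}{(1-\bar\rho_W)^2}\frac1K\sum_{k=0}^{K-1}\mathbb{E}\|\nabla f(\bar x_{\beta k})\|^2 .$$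
   Context: Problem: $n$ nodes, each with $f_i(x)=\mathbb{E}_{\xi_i\sim\mathcal D_i}[f_i(x;\xi_i)]$ on $\mathbb{R}^p$, $f=\frac1n\sum_i f_i$. Stochastic oracle: unbiased $\nabla f_i(x;\xi_i)$, independent samples across nodes and iterations. Assumptions: (S) each $f_i$ has $L$-Lipschitz gradient. (V) $\mathbb{E}\|\nabla f_i(x;\xi_i)-\nabla f_i(x)\|^2\le\sigma^2$. (G) $W$ doubly stochastic, $\rho_W:=\|W-\mathbf J\|_2^2<1$, $\mathbf J=\mathbf 1\mathbf 1^\top/n$. Algorithm: integers $\alpha,\beta\ge1$, stepsize $\gamma>0$; $\bar W=W^\alpha$ (FlexGT) or $\bar W=M_\alpha$ (Acc-FlexGT) with $M_{-1}=M_0=I$, $M_{s+1}=(1+\eta)WM_s-\eta M_{s-1}$, $\eta=\frac{1-\sqrt{1-\rho_W}}{1+\sqrt{1-\rho_W}}$; $\bar\rho_W:=\|\bar W-\mathbf J\|_2^2$ (spectral norm), assumed $<1$. Iterates $\mathbf x_t,\mathbf y_t\in\mathbb{R}^{n\times p}$; snapshot $\mathbf z_t=\mathbf x_{\beta\lfloor t/\beta\rfloor}$; $\nabla G_t$ has rows $\nabla f_i(z_{i,t};\xi_{i,t})$ with fresh samples. $\mathbf y_0=\nabla G_0$. For round $k\ge0$, $j=0,\dots,\beta-2$: $\mathbf x_{\beta k+j+1}=\mathbf x_{\beta k+j}-\gamma\mathbf y_{\beta k+j}$, $\mathbf y_{\beta k+j+1}=\mathbf y_{\beta k+j}+\nabla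 G_{\beta k+j+1}-\nabla G_{\beta k+j}$; round end: $\mathbf x_{\beta(k+1)}=\bar W(\mathbf x_{\beta k}-\gamma\sum_{j=0}^{\beta-1}\mathbf y_{\beta k+j})$, then $\mathbf y_{\beta(k+1)}=\bar W(\mathbf y_{\beta k}+\nabla G_{\beta(k+1)}-\nabla G_{\beta k})$. Notation: $\|\cdot\|$ Euclidean/Frobenius; $\bar x_t=\mathbf 1^\top\mathbf x_t/n$, $\tilde{\mathbf x}_t=\mathbf x_t-\mathbf 1\bar x_t$, $\bar y_t=\mathbf 1^\top\mathbf y_t/n$, $\tilde{\mathbf y}_t=\mathbf y_t-\mathbf 1\bar y_t$. *)

theory Defs
  imports "HOL-Probability.Probability"
begin

text \<open>Stacked iterates are elements of 'a ^ 'n: row i is the local vector of node i.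
The norm on 'a ^ 'n is sqrt of the sum of squared row norms, i.e. the Frobenius norm.\<close>

definition mix :: "real^'n^'n \<Rightarrow> 'a::real_vector^'n \<Rightarrow> 'a^'n" where
  "mix A X = (\<chi> i. \<Sum>j\<in>UNIV. (A$i$j) *\<^sub>R (X$j))"

definition Jmat :: "real^'n::finite^'n" where
  "Jmat = (\<chi> i j. 1 / real CARD('n))"

definition doubly_stochastic :: "real^'n::finite^'n \<Rightarrow> bool" where
  "doubly_stochastic W \<longleftrightarrow> (\<forall>i j. W$i$j \<ge> 0) \<and> (\<forall>i. (\<Sum>j\<in>UNIV. W$i$j) = 1)
      \<and> (\<forall>j. (\<Sum>i\<in>UNIV. W$i$j) = 1)"

definition rho_of :: "real^'n::finite^'n \<Rightarrow> real" where
  "rho_of A = (onorm (\<lambda>v::real^'n. (A - Jmat) *v v))\<^sup>2"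

fun mpow :: "real^'n::finite^'n \<Rightarrow> nat \<Rightarrow> real^'n^'n" where
  "mpow W 0 = mat 1"
| "mpow W (Suc k) = W ** mpow W k"

text \<open>Chebyshev-type acceleration: M_{-1} = M_0 = I, M_{s+1} = (1+eta) W M_s - eta M_{s-1}.\<close>
fun accM :: "real \<Rightarrow> real^'n::finite^'n \<Rightarrow> nat \<Rightarrow> real^'n^'n" where
  "accM eta W 0 = mat 1"
| "accM eta W (Suc 0) = (1 + eta) *\<^sub>R (W ** mat 1) - eta *\<^sub>R mat 1"
| "accM eta W (Suc (Suc s)) = (1 + eta) *\<^sub>R (W ** accM eta W (Suc s)) - eta *\<^sub>R accM eta W s"

definition eta_of :: "real \<Rightarrow> real" where
  "eta_of rho = (1 - sqrt (1 - rho)) / (1 + sqrt (1 - rho))"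

text \<open>The mixing matrix of FlexGT (acc = False) or Acc-FlexGT (acc = True).\<close>
definition Wbar :: "bool \<Rightarrow> real^'n::finite^'n \<Rightarrow> nat \<Rightarrow> real^'n^'n" where
  "Wbar acc W \<alpha> = (if acc then accM (eta_of (rho_of W)) W \<alpha> else mpow W \<alpha>)"

definition avg :: "'a::real_vector^'n::finite \<Rightarrow> 'a" where
  "avg X = (1 / real CARD('n)) *\<^sub>R (\<Sum>i\<in>UNIV. X$i)"

definition dev :: "'a::real_vector^'n::finite \<Rightarrow> 'a^'n" where
  "dev X = (\<chi> i. X$i - avg X)"

definition sgrad :: "('n \<Rightarrow> 'a \<Rightarrow> 's \<Rightarrow> 'a) \<Rightarrow> ('n \<Rightarrow> nat \<Rightarrow> 'w \<Rightarrow> 's)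
    \<Rightarrow> 'w \<Rightarrow> nat \<Rightarrow> 'a^'n::finite \<Rightarrow> 'a^'n" where
  "sgrad G xi w t Z = (\<chi> i. G i (Z$i) (xi i t w))"

text \<open>Inner (local) steps of round k, starting from (x_{beta k}, y_{beta k}) = (Xk, Yk);
  inner ... j = (x_{beta k + j}, y_{beta k + j}) for j < beta. The snapshot is Xk.\<close>
fun inner :: "('n \<Rightarrow> 'a::real_vector \<Rightarrow> 's \<Rightarrow> 'a) \<Rightarrow> ('n \<Rightarrow> nat \<Rightarrow> 'w \<Rightarrow> 's) \<Rightarrow> 'w
    \<Rightarrow> real \<Rightarrow> nat \<Rightarrow> nat \<Rightarrow> 'a^'n::finite \<Rightarrow> 'a^'n \<Rightarrow> nat \<Rightarrow> ('a^'n) \<times> ('a^'n)" where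
  "inner G xi w \<gamma> \<beta> k Xk Yk 0 = (Xk, Yk)"
| "inner G xi w \<gamma> \<beta> k Xk Yk (Suc j) =
     (let (X, Y) = inner G xi w \<gamma> \<beta> k Xk Yk j in
       (X - \<gamma> *\<^sub>R Y,
        Y + sgrad G xi w (\<beta> * k + j + 1) Xk - sgrad G xi w (\<beta> * k + j) Xk))"

text \<open>Round-level recursion: rounds ... k w = (x_{beta k}, y_{beta k}) at sample point w.\<close>
fun rounds :: "real^'n::finite^'n \<Rightarrow> ('n \<Rightarrow> 'a::real_vector \<Rightarrow> 's \<Rightarrow> 'a) \<Rightarrow> ('n \<Rightarrow> nat \<Rightarrow> 'w \<Rightarrow> 's)
    \<Rightarrow> real \<Rightarrow> nat \<Rightarrow> 'a^'n \<Rightarrow> nat \<Rightarrow> 'w \<Rightarrow> ('a^'n) \<times> ('a^'n)" where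
  "rounds Wb G xi \<gamma> \<beta> x0 0 w = (x0, sgrad G xi w 0 x0)"
| "rounds Wb G xi \<gamma> \<beta> x0 (Suc k) w =
     (let (Xk, Yk) = rounds Wb G xi \<gamma> \<beta> x0 k w;
          X' = mix Wb (Xk - \<gamma> *\<^sub>R (\<Sum>j<\<beta>. snd (inner G xi w \<gamma> \<beta> k Xk Yk j)))
      in (X', mix Wb (Yk + sgrad G xi w (\<beta> * (k + 1)) X' - sgrad G xi w (\<beta> * k) Xk)))"

definition flexgt :: "real^'n::finite^'n \<Rightarrow> ('n \<Rightarrow> 'a::real_vector \<Rightarrow> 's \<Rightarrow> 'a) \<Rightarrow> ('n \<Rightarrow> nat \<Rightarrow> 'w \<Rightarrow> 's)
    \<Rightarrow> real \<Rightarrow> nat \<Rightarrow> 'a^'n \<Rightarrow> nat \<Rightarrow> 'w \<Rightarrow> ('a^'n) \<times> ('a^'n)" where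
  "flexgt Wb G xi \<gamma> \<beta> x0 t w =
     (let k = t div \<beta>; (Xk, Yk) = rounds Wb G xi \<gamma> \<beta> x0 k w
      in inner G xi w \<gamma> \<beta> k Xk Yk (t mod \<beta>))"

end

theory Submission
  imports Defs
begin

section \<open>Linear algebra on stacked vectors\<close>

definition cvec :: "'a \<Rightarrow> 'a^'n" where "cvec c = (\<chi> i. c)"
definition rowst :: "real^'n::finite^'n \<Rightarrow> bool" where "rowst C \<longleftrightarrow> (\<forall>i. (\<Sum>j\<in>UNIV. C$i$j) = 1)"
definition colst :: "real^'n::finite^'n \<Rightarrow> bool" where "colst C \<longleftrightarrow> (\<forall>j. (\<Sum>i\<in>UNIV. C$i$j) = 1)"

lemma cvec_zero[simp]: "cvec 0 = 0" by (simp add: cvec_def vec_eq_iff)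

lemma mix_add: "mix C (X + Y) = mix C X + mix C Y"
  by (simp add: mix_def vec_eq_iff scaleR_add_right sum.distrib)
lemma mix_diff: "mix C (X - Y) = mix C X - mix C Y"
  by (simp add: mix_def vec_eq_iff scaleR_diff_right sum_subtractf)
lemma mix_scaleR: "mix C (a *\<^sub>R X) = a *\<^sub>R mix C X"
  by (simp add: mix_def vec_eq_iff scaleR_sum_right mult.commute)
lemma mix_zero: "mix C 0 = 0"
  by (simp add: mix_def vec_eq_iff)
lemma mix_sum: "mix C (\<Sum>j\<in>A. X j) = (\<Sum>j\<in>A. mix C (X j))"
  by (induction A rule: infinite_finite_induct) (auto simp: mix_zero mix_add)
lemma mix_mat_diff: "mix (A - B) X = mix A X - mix B X"
  by (simp add: mix_def vec_eq_iff scaleR_diff_left sum_subtractf)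

lemma mix_cvec: "rowst C \<Longrightarrow> mix C (cvec c) = cvec c"
  by (simp add: mix_def cvec_def rowst_def vec_eq_iff flip: scaleR_sum_left)

lemma avg_add: "avg (X + Y) = avg X + avg Y"
  by (simp add: avg_def sum.distrib scaleR_add_right)
lemma avg_diff: "avg (X - Y) = avg X - avg Y"
  by (simp add: avg_def sum_subtractf scaleR_diff_right)
lemma avg_scaleR: "avg (a *\<^sub>R X) = a *\<^sub>R avg X"
  by (simp add: avg_def scaleR_sum_right)
lemma avg_zero: "avg 0 = 0"
  by (simp add: avg_def)
lemma avg_sum: "avg (\<Sum>j\<in>A. X j) = (\<Sum>j\<in>A. avg (X j))"
  by (induction A rule: infinite_finite_induct) (auto simp: avg_zero avg_add)
lemma avg_cvec: "avg (cvec c :: 'a::real_vector^'n::finite) = c"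
  by (simp add: avg_def cvec_def sum_constant_scaleR)

lemma avg_mix: assumes "colst C" shows "avg (mix C X) = avg X"
proof -
  have "(\<Sum>i\<in>UNIV. (mix C X)$i) = (\<Sum>i\<in>UNIV. \<Sum>j\<in>UNIV. C$i$j *\<^sub>R X$j)"
    by (simp add: mix_def)
  also have "\<dots> = (\<Sum>j\<in>UNIV. \<Sum>i\<in>UNIV. C$i$j *\<^sub>R X$j)" by (rule sum.swap)
  also have "\<dots> = (\<Sum>j\<in>UNIV. X$j)"
    using assms by (simp add: colst_def flip: scaleR_sum_left)
  finally show ?thesis by (simp add: avg_def)
qed

lemma dev_eq: "dev X = X - cvec (avg X)"
  by (simp add: dev_def cvec_def vec_eq_iff)
lemma avg_dev: "avg (dev X :: 'a::real_vector^'n::finite) = 0"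
  by (simp add: dev_eq avg_diff avg_cvec)
lemma dev_add: "dev (X + Y) = dev X + dev Y"
  by (simp add: dev_def vec_eq_iff avg_add)
lemma dev_diff: "dev (X - Y) = dev X - dev Y"
  by (simp add: dev_def vec_eq_iff avg_diff)
lemma dev_scaleR: "dev (a *\<^sub>R X) = a *\<^sub>R dev X"
  by (simp add: dev_def vec_eq_iff avg_scaleR scaleR_diff_right)
lemma dev_cvec: "dev (cvec c :: 'a::real_vector^'n::finite) = 0"
  by (simp add: dev_eq avg_cvec)
lemma dev_dev: "dev (dev X :: 'a::real_vector^'n::finite) = dev X"
  by (simp add: dev_eq[of "dev X"] avg_dev)

lemma mix_J: "mix Jmat X = cvec (avg X)"
  by (simp add: mix_def Jmat_def cvec_def avg_def vec_eq_iff scaleR_sum_right)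

lemma normsq_vec: "(norm (X :: 'a::real_normed_vector^'n::finite))\<^sup>2 = (\<Sum>i\<in>UNIV. (norm (X$i))\<^sup>2)"
  by (simp add: norm_vec_def L2_set_def sum_nonneg)

lemma norm_cvec: "(norm (cvec c :: 'a::real_normed_vector^'n::finite))\<^sup>2 = real CARD('n) * (norm c)\<^sup>2"
  by (simp add: normsq_vec cvec_def)

lemma pyth: "(norm (X :: 'a::real_inner^'n::finite))\<^sup>2
   = real CARD('n) * (norm (avg X))\<^sup>2 + (norm (dev X))\<^sup>2"
proof -
  let ?a = "avg X"
  have s: "(\<Sum>i\<in>UNIV. X$i) = real CARD('n) *\<^sub>R ?a" by (simp add: avg_def)
  have "(norm (dev X))\<^sup>2 = (\<Sum>i\<in>UNIV. (norm (X$i - ?a))\<^sup>2)"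
    by (simp add: normsq_vec dev_def)
  also have "\<dots> = (\<Sum>i\<in>UNIV. (norm (X$i))\<^sup>2 - 2 * (X$i \<bullet> ?a) + (norm ?a)\<^sup>2)"
    by (intro sum.cong refl) (simp add: power2_norm_eq_inner inner_diff_left inner_diff_right inner_commute)
  also have "\<dots> = (\<Sum>i\<in>UNIV. (norm (X$i))\<^sup>2) - 2 * ((\<Sum>i\<in>UNIV. X$i) \<bullet> ?a) + real CARD('n) * (norm ?a)\<^sup>2"
    by (simp add: sum.distrib sum_subtractf inner_sum_left sum_distrib_left)
  also have "\<dots> = (norm X)\<^sup>2 - real CARD('n) * (norm ?a)\<^sup>2"
    by (simp add: s normsq_vec power2_norm_eq_inner)
  finally show ?thesis by simp
qed

lemma norm_dev_le: "norm (dev (X :: 'a::real_inner^'n::finite)) \<le> norm X"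
proof -
  have "(norm (dev X))\<^sup>2 \<le> (norm X)\<^sup>2" by (simp add: pyth[of X])
  then show ?thesis by (simp add: power2_le_iff_abs_le)
qed

lemma norm_sq_euclid: "(norm (x::'a::euclidean_space))\<^sup>2 = (\<Sum>b\<in>Basis. (x \<bullet> b)\<^sup>2)"
  unfolding power2_norm_eq_inner by (subst euclidean_inner) (simp add: power2_eq_square)

lemma mix_bound:
  fixes X :: "'a::euclidean_space^'n::finite"
  shows "(norm (mix C X))\<^sup>2 \<le> (onorm (\<lambda>v. C *v v))\<^sup>2 * (norm X)\<^sup>2"
proof -
  define z where "z b = (\<chi> j. X$j \<bullet> b)" for b
  have comp: "(mix C X)$i \<bullet> b = (C *v z b)$i" for i b
    by (simp add: mix_def z_def matrix_vector_mult_def inner_sum_left)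
  have nz: "(norm (v::real^'n))\<^sup>2 = (\<Sum>i\<in>UNIV. (v$i)\<^sup>2)" for v
    by (simp add: normsq_vec)
  have "(norm (mix C X))\<^sup>2 = (\<Sum>i\<in>UNIV. \<Sum>b\<in>Basis. ((mix C X)$i \<bullet> b)\<^sup>2)"
    by (simp add: normsq_vec norm_sq_euclid)
  also have "\<dots> = (\<Sum>b\<in>Basis. \<Sum>i\<in>UNIV. ((C *v z b)$i)\<^sup>2)"
    by (subst sum.swap) (simp add: comp)
  also have "\<dots> = (\<Sum>b\<in>Basis. (norm (C *v z b))\<^sup>2)" by (simp add: nz)
  also have "\<dots> \<le> (\<Sum>b\<in>(Basis::'a set). (onorm (\<lambda>v. C *v v))\<^sup>2 * (norm (z b))\<^sup>2)"
  proof (intro sum_mono)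
    fix b :: 'a
    have "norm (C *v z b) \<le> onorm (\<lambda>v. C *v v) * norm (z b)"
      using onorm[OF matrix_vector_mul_bounded_linear[of C]] by simp
    then have "(norm (C *v z b))\<^sup>2 \<le> (onorm (\<lambda>v. C *v v) * norm (z b))\<^sup>2"
      by (intro power_mono) auto
    then show "(norm (C *v z b))\<^sup>2 \<le> (onorm (\<lambda>v. C *v v))\<^sup>2 * (norm (z b))\<^sup>2"
      by (simp add: power_mult_distrib)
  qed
  also have "\<dots> = (onorm (\<lambda>v. C *v v))\<^sup>2 * (\<Sum>b\<in>(Basis::'a set). \<Sum>j\<in>UNIV. (X$j \<bullet> b)\<^sup>2)"
    by (simp add: sum_distrib_left nz z_def)
  also have "\<dots> = (onorm (\<lambda>v. C *v v))\<^sup>2 * (norm X)\<^sup>2"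
    by (subst sum.swap) (simp add: normsq_vec norm_sq_euclid)
  finally show ?thesis .
qed

lemma dev_mix: assumes "rowst C" "colst C" shows "dev (mix C X) = mix C (dev X)"
  by (simp add: dev_eq avg_mix[OF assms(2)] mix_diff mix_cvec[OF assms(1)])

lemma mix_dev_J: "mix C (dev X) = mix (C - Jmat) (dev (X :: 'a::real_vector^'n::finite))"
  by (simp add: mix_mat_diff mix_J avg_dev cvec_def zero_vec_def)

lemma contr:
  fixes X :: "'a::euclidean_space^'n::finite"
  shows "(norm (mix C (dev X)))\<^sup>2 \<le> rho_of C * (norm (dev X))\<^sup>2"
  unfolding mix_dev_J[of C] rho_of_def by (rule mix_bound)

lemma rho_nonneg: "rho_of C \<ge> 0" by (simp add: rho_of_def)

lemma contr2:
  fixes X :: "'a::euclidean_space^'n::finite"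
  assumes "rowst C" "colst C" "rho_of C \<le> 1"
  shows "(norm (mix C X))\<^sup>2 \<le> (norm X)\<^sup>2"
proof -
  have "(norm (mix C X))\<^sup>2 = real CARD('n) * (norm (avg X))\<^sup>2 + (norm (mix C (dev X)))\<^sup>2"
    by (simp add: pyth[of "mix C X"] avg_mix[OF assms(2)] dev_mix[OF assms(1,2)])
  also have "\<dots> \<le> real CARD('n) * (norm (avg X))\<^sup>2 + (norm (dev X))\<^sup>2"
  proof -
    have h: "rho_of C * (norm (dev X))\<^sup>2 \<le> (norm (dev X))\<^sup>2"
      using mult_right_mono[OF assms(3), of "(norm (dev X))\<^sup>2"] by simp
    show ?thesis using contr[of C X] h by linarith
  qed
  also have "\<dots> = (norm X)\<^sup>2" by (simp add: pyth[of X])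
  finally show ?thesis .
qed

section \<open>Row and column sums of the mixing matrices\<close>

lemma rowst_mat1: "rowst (mat 1)"
  by (simp add: rowst_def mat_def if_distrib cong: if_cong)
lemma colst_mat1: "colst (mat 1)"
  by (simp add: colst_def mat_def if_distrib cong: if_cong)

lemma rowst_mult: assumes "rowst A" "rowst B" shows "rowst (A ** B)"
proof -
  have "(\<Sum>j\<in>UNIV. (A ** B)$i$j) = 1" for i
  proof -
    have "(\<Sum>j\<in>UNIV. (A ** B)$i$j) = (\<Sum>j\<in>UNIV. \<Sum>k\<in>UNIV. A$i$k * B$k$j)"
      by (simp add: matrix_matrix_mult_def)
    also have "\<dots> = (\<Sum>k\<in>UNIV. A$i$k * (\<Sum>j\<in>UNIV. B$k$j))"
      by (subst sum.swap) (simp add: sum_distrib_left)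
    also have "\<dots> = 1" using assms by (simp add: rowst_def)
    finally show ?thesis .
  qed
  then show ?thesis by (simp add: rowst_def)
qed

lemma colst_mult: assumes "colst A" "colst B" shows "colst (A ** B)"
proof -
  have "(\<Sum>i\<in>UNIV. (A ** B)$i$j) = 1" for j
  proof -
    have "(\<Sum>i\<in>UNIV. (A ** B)$i$j) = (\<Sum>i\<in>UNIV. \<Sum>k\<in>UNIV. A$i$k * B$k$j)"
      by (simp add: matrix_matrix_mult_def)
    also have "\<dots> = (\<Sum>k\<in>UNIV. (\<Sum>i\<in>UNIV. A$i$k) * B$k$j)"
      by (subst sum.swap) (simp add: sum_distrib_right)
    also have "\<dots> = 1" using assms by (simp add: colst_def)
    finally show ?thesis .
  qed
  then show ?thesis by (simp add: colst_def)
qed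

lemma rowst_aff: assumes "rowst A" "rowst B" shows "rowst ((1 + e) *\<^sub>R A - e *\<^sub>R B)"
  using assms by (simp add: rowst_def sum_subtractf flip: sum_distrib_left)
lemma colst_aff: assumes "colst A" "colst B" shows "colst ((1 + e) *\<^sub>R A - e *\<^sub>R B)"
  using assms by (simp add: colst_def sum_subtractf flip: sum_distrib_left)

lemma ds_rowcol: "doubly_stochastic W \<Longrightarrow> rowst W \<and> colst W"
  by (simp add: doubly_stochastic_def rowst_def colst_def)

lemma mpow_st: "rowst W \<Longrightarrow> colst W \<Longrightarrow> rowst (mpow W k) \<and> colst (mpow W k)"
  by (induction k) (auto simp: rowst_mat1 colst_mat1 rowst_mult colst_mult)

lemma accM_st: "rowst W \<Longrightarrow> colst W \<Longrightarrow> rowst (accM eta W k) \<and> colst (accM eta W k)"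
  by (induction eta W k rule: accM.induct)
     (auto simp: rowst_mat1 colst_mat1 rowst_mult colst_mult intro!: rowst_aff colst_aff)

lemma Wbar_st: "doubly_stochastic W \<Longrightarrow> rowst (Wbar acc W a) \<and> colst (Wbar acc W a)"
  using mpow_st[of W a] accM_st[of W _ a] ds_rowcol[of W] by (cases acc) (auto simp: Wbar_def)

section \<open>Measurability on stacked vectors\<close>

lemma bm_vec_lambda:
  assumes "\<And>i. (\<lambda>w. f w i) \<in> borel_measurable N"
  shows "(\<lambda>w. (\<chi> i. f w i) :: 'a::euclidean_space^'n::finite) \<in> borel_measurable N"
proof (subst borel_measurable_euclidean_space, intro ballI)
  fix b :: "'a^'n" assume "b \<in> Basis"
  then obtain i u where b: "b = axis i u" "u \<in> Basis" by (auto simp: Basis_vec_def)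
  have "(\<lambda>w. (\<chi> i. f w i) \<bullet> b) = (\<lambda>w. f w i \<bullet> u)" by (simp add: b inner_axis)
  then show "(\<lambda>w. (\<chi> i. f w i) \<bullet> b) \<in> borel_measurable N"
    using assms[of i] by simp
qed

lemma bm_vec_nth[measurable (raw)]:
  fixes f :: "_ \<Rightarrow> 'a::euclidean_space^'n::finite"
  assumes f: "f \<in> borel_measurable N"
  shows "(\<lambda>x. (f x) $ i) \<in> borel_measurable N"
proof -
  have "continuous_on UNIV (\<lambda>x::'a^'n. x$i)" by (intro linear_continuous_on bounded_linear_vec_nth)
  from borel_measurable_continuous_on[OF this f] show ?thesis by simp
qed

lemma bm_mix[measurable (raw)]:
  fixes f :: "_ \<Rightarrow> 'a::euclidean_space^'n::finite"
  shows "f \<in> borel_measurable N \<Longrightarrow> (\<lambda>x. mix C (f x)) \<in> borel_measurable N"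
  unfolding mix_def by (intro bm_vec_lambda) measurable

lemma bm_avg[measurable (raw)]:
  fixes f :: "_ \<Rightarrow> 'a::euclidean_space^'n::finite"
  assumes f: "f \<in> borel_measurable N"
  shows "(\<lambda>x. avg (f x)) \<in> borel_measurable N"
proof -
  have "(\<lambda>x. (1 / real CARD('n)) *\<^sub>R (\<Sum>i\<in>UNIV. f x $ i)) \<in> borel_measurable N"
    by (intro borel_measurable_scaleR borel_measurable_const borel_measurable_sum bm_vec_nth f)
  then show ?thesis by (simp add: avg_def)
qed

lemma bm_dev[measurable (raw)]:
  fixes f :: "_ \<Rightarrow> 'a::euclidean_space^'n::finite"
  assumes f: "f \<in> borel_measurable N"
  shows "(\<lambda>x. dev (f x)) \<in> borel_measurable N"
  unfolding dev_def by (intro bm_vec_lambda borel_measurable_diff bm_vec_nth bm_avg f)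

definition IT :: "nat \<Rightarrow> ('n \<times> nat) set" where "IT T = {p. snd p < T}"
definition PS :: "('n \<Rightarrow> 's measure) \<Rightarrow> nat \<Rightarrow> ('n \<times> nat \<Rightarrow> 's) measure" where
  "PS D T = PiM (IT T) (\<lambda>(i, t). D i)"
definition RT :: "('n \<Rightarrow> nat \<Rightarrow> 'w \<Rightarrow> 's) \<Rightarrow> nat \<Rightarrow> 'w \<Rightarrow> ('n \<times> nat \<Rightarrow> 's)" where
  "RT xi T w = restrict (\<lambda>p. (\<lambda>(i, t). xi i t) p w) (IT T)"

locale fsetup = prob_space M for M :: "'w measure" +
  fixes D :: "'n::finite \<Rightarrow> 's measure"
    and xi :: "'n \<Rightarrow> nat \<Rightarrow> 'w \<Rightarrow> 's"
    and G :: "'n \<Rightarrow> 'a::euclidean_space \<Rightarrow> 's \<Rightarrow> 'a"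
    and grad :: "'n \<Rightarrow> 'a \<Rightarrow> 'a"
    and \<sigma> L :: real
  assumes D: "\<And>i. prob_space (D i)"
    and xi_meas: "\<And>i t. xi i t \<in> measurable M (D i)"
    and xi_distr: "\<And>i t. distr M (D i) (xi i t) = D i"
    and xi_indep: "indep_vars (\<lambda>(i, t). D i) (\<lambda>(i, t). xi i t) UNIV"
    and G_meas: "\<And>i. (\<lambda>(x, s). G i x s) \<in> borel_measurable (borel \<Otimes>\<^sub>M D i)"
    and unbiased: "\<And>i x. integrable (D i) (G i x) \<and> (\<integral>s. G i x s \<partial>D i) = grad i x"
    and variance: "\<And>i x. (\<integral>\<^sup>+s. ennreal ((norm (G i x s - grad i x))\<^sup>2) \<partial>D i) \<le> ennreal (\<sigma>\<^sup>2)"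
    and smooth: "\<And>i x y. norm (grad i x - grad i y) \<le> L * norm (x - y)"
begin

definition pre :: "nat \<Rightarrow> 'b measure \<Rightarrow> ('w \<Rightarrow> 'b) \<Rightarrow> bool" where
  "pre T N V \<longleftrightarrow> (\<exists>\<Phi> \<in> PS D T \<rightarrow>\<^sub>M N. \<forall>w\<in>space M. V w = \<Phi> (RT xi T w))"

lemma RT_meas: "RT xi T \<in> M \<rightarrow>\<^sub>M PS D T"
  unfolding RT_def PS_def
proof (rule measurable_restrict)
  fix p :: "'n \<times> nat" assume "p \<in> IT T"
  show "(\<lambda>w. (\<lambda>(i, t). xi i t) p w) \<in> M \<rightarrow>\<^sub>M (\<lambda>(i, t). D i) p"
    by (cases p) (simp add: xi_meas)
qed

lemma pre_meas: "pre T N V \<Longrightarrow> V \<in> M \<rightarrow>\<^sub>M N"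
  unfolding pre_def
proof (elim bexE)
  fix \<Phi> assume \<Phi>: "\<Phi> \<in> PS D T \<rightarrow>\<^sub>M N" and eq: "\<forall>w\<in>space M. V w = \<Phi> (RT xi T w)"
  have "(\<lambda>w. \<Phi> (RT xi T w)) \<in> M \<rightarrow>\<^sub>M N" using measurable_comp[OF RT_meas \<Phi>] by (simp add: comp_def)
  then show ?thesis using eq by (subst measurable_cong[where g="\<lambda>w. \<Phi> (RT xi T w)"]) auto
qed

lemma pre_const: "c \<in> space N \<Longrightarrow> pre T N (\<lambda>w. c)"
  unfolding pre_def by (intro bexI[of _ "\<lambda>r. c"]) auto

lemma pre_comp: "pre T N V \<Longrightarrow> f \<in> N \<rightarrow>\<^sub>M N' \<Longrightarrow> pre T N' (\<lambda>w. f (V w))"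
  unfolding pre_def
  by (elim bexE, rule bexI[of _ "\<lambda>r. f (_ r)"]) (auto intro: measurable_compose)

lemma pre_pair: "pre T N1 V1 \<Longrightarrow> pre T N2 V2 \<Longrightarrow> pre T (N1 \<Otimes>\<^sub>M N2) (\<lambda>w. (V1 w, V2 w))"
  unfolding pre_def
proof (elim bexE)
  fix \<Phi>1 \<Phi>2 assume "\<Phi>1 \<in> PS D T \<rightarrow>\<^sub>M N1" "\<forall>w\<in>space M. V1 w = \<Phi>1 (RT xi T w)"
    "\<Phi>2 \<in> PS D T \<rightarrow>\<^sub>M N2" "\<forall>w\<in>space M. V2 w = \<Phi>2 (RT xi T w)"
  then show "\<exists>\<Phi>\<in>PS D T \<rightarrow>\<^sub>M N1 \<Otimes>\<^sub>M N2. \<forall>w\<in>space M. (V1 w, V2 w) = \<Phi> (RT xi T w)"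
    by (intro bexI[of _ "\<lambda>r. (\<Phi>1 r, \<Phi>2 r)"]) auto
qed

lemma pre_mono: assumes "T \<le> T'" "pre T N V" shows "pre T' N V"
proof -
  obtain \<Phi> where \<Phi>: "\<Phi> \<in> PS D T \<rightarrow>\<^sub>M N" and eq: "\<forall>w\<in>space M. V w = \<Phi> (RT xi T w)"
    using assms(2) unfolding pre_def by blast
  have sub: "IT T \<subseteq> IT T'" using assms(1) by (auto simp: IT_def)
  have m: "(\<lambda>r. restrict r (IT T)) \<in> PS D T' \<rightarrow>\<^sub>M PS D T"
    unfolding PS_def by (rule measurable_restrict_subset[OF sub])
  have r: "RT xi T w = restrict (RT xi T' w) (IT T)" for w
    using sub by (auto simp: RT_def fun_eq_iff)
  show ?thesis unfolding pre_def
    by (intro bexI[of _ "\<lambda>r. \<Phi> (restrict r (IT T))"]) (use eq r measurable_comp[OF m \<Phi>] in \<open>auto simp: comp_def\<close>)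
qed

lemma pre_xi: assumes "t < T" shows "pre T (D i) (xi i t)"
proof -
  have "(i, t) \<in> IT T" using assms by (simp add: IT_def)
  then have m: "(\<lambda>r. r (i, t)) \<in> PS D T \<rightarrow>\<^sub>M D i"
    unfolding PS_def using measurable_component_singleton[of "(i,t)" "IT T" "\<lambda>(i, t). D i"] by simp
  show ?thesis unfolding pre_def
    using \<open>(i, t) \<in> IT T\<close> by (intro bexI[OF _ m]) (simp add: RT_def)
qed

lemma pre_sgrad:
  assumes "t < T" "pre T borel Z"
  shows "pre T borel (\<lambda>w. sgrad G xi w t (Z w))"
proof -
  obtain \<Phi> where \<Phi>: "\<Phi> \<in> borel_measurable (PS D T)" and eq: "\<forall>w\<in>space M. Z w = \<Phi> (RT xi T w)"
    using assms(2) unfolding pre_def by blast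
  have it: "(i, t) \<in> IT T" for i using assms by (simp add: IT_def)
  have c: "(\<lambda>r. r (i, t)) \<in> PS D T \<rightarrow>\<^sub>M D i" for i
  proof -
    have "(\<lambda>x. x (i,t)) \<in> PiM (IT T) (\<lambda>(i,t). D i) \<rightarrow>\<^sub>M (\<lambda>(i,t). D i) (i,t)"
      by (rule measurable_component_singleton) (rule it)
    then show ?thesis by (simp add: PS_def)
  qed
  have "(\<lambda>r. G i ((\<Phi> r)$i) (r (i, t))) \<in> borel_measurable (PS D T)" for i
  proof -
    have "(\<lambda>r. ((\<Phi> r)$i, r (i, t))) \<in> PS D T \<rightarrow>\<^sub>M borel \<Otimes>\<^sub>M D i"
      using \<Phi> c by (intro measurable_Pair) (auto intro: bm_vec_nth)
    from measurable_comp[OF this G_meas] show ?thesis by (simp add: comp_def)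
  qed
  then have m: "(\<lambda>r. \<chi> i. G i ((\<Phi> r)$i) (r (i, t))) \<in> borel_measurable (PS D T)"
    by (rule bm_vec_lambda)
  have e: "\<forall>w\<in>space M. sgrad G xi w t (Z w) = (\<chi> i. G i ((\<Phi> (RT xi T w))$i) ((RT xi T w) (i, t)))"
    using eq assms(1) by (simp add: sgrad_def RT_def IT_def)
  show ?thesis unfolding pre_def by (rule bexI[OF _ m]) (use e in simp)
qed

lemma pre_sum:
  assumes "finite A" "\<And>j. j \<in> A \<Longrightarrow> pre T borel (V j)"
  shows "pre T borel (\<lambda>w. (\<Sum>j\<in>A. V j w) :: 'b::{second_countable_topology, real_normed_vector})"
  using assms
proof (induction A rule: finite_induct)
  case empty then show ?case by (simp add: pre_const)
next
  case (insert x F)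
  have "pre T (borel \<Otimes>\<^sub>M borel) (\<lambda>w. (V x w, \<Sum>j\<in>F. V j w))"
    using insert by (intro pre_pair) auto
  from pre_comp[OF this, of "\<lambda>(a, b). a + b" borel] insert show ?case by simp
qed

end

context fsetup begin
definition R1 :: "'n \<Rightarrow> nat \<Rightarrow> 'w \<Rightarrow> ('n \<times> nat \<Rightarrow> 's)" where
  "R1 i T w = restrict (\<lambda>p. (\<lambda>(i, t). xi i t) p w) {(i, T)}"
definition P1 :: "'n \<Rightarrow> nat \<Rightarrow> ('n \<times> nat \<Rightarrow> 's) measure" where
  "P1 i T = PiM {(i, T)} (\<lambda>(i, t). D i)"

lemma R1_meas: "R1 i T \<in> M \<rightarrow>\<^sub>M P1 i T"
  unfolding R1_def P1_def
proof (rule measurable_restrict)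
  fix p :: "'n \<times> nat" assume "p \<in> {(i, T)}"
  show "(\<lambda>w. (\<lambda>(i, t). xi i t) p w) \<in> M \<rightarrow>\<^sub>M (\<lambda>(i, t). D i) p"
    by (cases p) (simp add: xi_meas)
qed

lemma indep_RT: "distr M (PS D T) (RT xi T) \<Otimes>\<^sub>M distr M (P1 i T) (R1 i T)
   = distr M (PS D T \<Otimes>\<^sub>M P1 i T) (\<lambda>w. (RT xi T w, R1 i T w))"
proof -
  have d: "IT T \<inter> {(i, T)} = {}" by (auto simp: IT_def)
  have iv: "indep_var (PiM (IT T) (\<lambda>(i, t). D i)) (\<lambda>\<omega>. restrict (\<lambda>p. (\<lambda>(i, t). xi i t) p \<omega>) (IT T))
     (PiM {(i, T)} (\<lambda>(i, t). D i)) (\<lambda>\<omega>. restrict (\<lambda>p. (\<lambda>(i, t). xi i t) p \<omega>) {(i, T)})"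
    by (rule indep_var_restrict[OF xi_indep d]) auto
  then show ?thesis unfolding indep_var_distribution_eq PS_def P1_def RT_def R1_def by blast
qed

lemma freeze:
  fixes V :: "'w \<Rightarrow> 'b"
  assumes "pre T N V"
  shows "distr M (N \<Otimes>\<^sub>M D i) (\<lambda>w. (V w, xi i T w)) = distr M N V \<Otimes>\<^sub>M D i"
proof -
  obtain \<Phi> where \<Phi>: "\<Phi> \<in> PS D T \<rightarrow>\<^sub>M N" and eq: "\<forall>w\<in>space M. V w = \<Phi> (RT xi T w)"
    using assms unfolding pre_def by blast
  have c: "(\<lambda>r. r (i, T)) \<in> P1 i T \<rightarrow>\<^sub>M D i"
    unfolding P1_def using measurable_component_singleton[of "(i,T)" "{(i,T)}" "\<lambda>(i, t). D i"] by simp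
  define h :: "('n \<times> nat \<Rightarrow> 's) \<times> ('n \<times> nat \<Rightarrow> 's) \<Rightarrow> 'b \<times> 's"
    where "h = (\<lambda>(a, b). (\<Phi> a, (\<lambda>r. r (i, T)) b))"
  have hm: "h \<in> PS D T \<Otimes>\<^sub>M P1 i T \<rightarrow>\<^sub>M N \<Otimes>\<^sub>M D i"
    unfolding h_def using \<Phi> c
    by (intro measurable_Pair measurable_split_conv[THEN iffD2]) (auto intro: measurable_compose[OF measurable_fst] measurable_compose[OF measurable_snd])
  have pm: "(\<lambda>w. (RT xi T w, R1 i T w)) \<in> M \<rightarrow>\<^sub>M PS D T \<Otimes>\<^sub>M P1 i T"
    using RT_meas R1_meas by (intro measurable_Pair)
  have sf: "sigma_finite_measure (distr (distr M (P1 i T) (R1 i T)) (D i) (\<lambda>r. r (i, T)))"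
  proof -
    interpret Q: prob_space "distr M (P1 i T) (R1 i T)" by (rule prob_space_distr[OF R1_meas])
    have "c' \<in> distr M (P1 i T) (R1 i T) \<rightarrow>\<^sub>M D i" if "c' \<in> P1 i T \<rightarrow>\<^sub>M D i" for c'
      using that by simp
    from Q.prob_space_distr[OF this[OF c]] show ?thesis by (rule prob_space_imp_sigma_finite)
  qed
  have "distr M (N \<Otimes>\<^sub>M D i) (\<lambda>w. (V w, xi i T w)) = distr M (N \<Otimes>\<^sub>M D i) (h \<circ> (\<lambda>w. (RT xi T w, R1 i T w)))"
    using eq by (intro distr_cong) (auto simp: h_def R1_def)
  also have "\<dots> = distr (distr M (PS D T \<Otimes>\<^sub>M P1 i T) (\<lambda>w. (RT xi T w, R1 i T w))) (N \<Otimes>\<^sub>M D i) h"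
    by (rule distr_distr[OF hm pm, symmetric])
  also have "\<dots> = distr (distr M (PS D T) (RT xi T) \<Otimes>\<^sub>M distr M (P1 i T) (R1 i T)) (N \<Otimes>\<^sub>M D i) h"
    by (simp add: indep_RT)
  also have "\<dots> = distr (distr M (PS D T) (RT xi T)) N \<Phi> \<Otimes>\<^sub>M distr (distr M (P1 i T) (R1 i T)) (D i) (\<lambda>r. r (i, T))"
    unfolding h_def
    by (rule pair_measure_distr[symmetric]) (use \<Phi> c sf in \<open>auto simp: measurable_distr_eq1\<close>)
  also have "\<dots> = distr M N (\<Phi> \<circ> RT xi T) \<Otimes>\<^sub>M distr M (D i) ((\<lambda>r. r (i, T)) \<circ> R1 i T)"
    by (simp add: distr_distr[OF \<Phi> RT_meas] distr_distr[OF c R1_meas])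
  also have "distr M N (\<Phi> \<circ> RT xi T) = distr M N V"
    using eq by (intro distr_cong) auto
  also have "distr M (D i) ((\<lambda>r. r (i, T)) \<circ> R1 i T) = D i"
    using xi_distr[of i T] by (simp add: R1_def comp_def)
  finally show ?thesis .
qed

lemma nn_freeze:
  assumes "pre T N V" and f: "f \<in> borel_measurable (N \<Otimes>\<^sub>M D i)"
  shows "(\<integral>\<^sup>+w. f (V w, xi i T w) \<partial>M) = (\<integral>\<^sup>+w. (\<integral>\<^sup>+s. f (V w, s) \<partial>D i) \<partial>M)"
proof -
  interpret Di: prob_space "D i" by (rule D)
  have Vm: "V \<in> M \<rightarrow>\<^sub>M N" by (rule pre_meas[OF assms(1)])
  have pm: "(\<lambda>w. (V w, xi i T w)) \<in> M \<rightarrow>\<^sub>M N \<Otimes>\<^sub>M D i"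
    using Vm xi_meas by (intro measurable_Pair) auto
  have sets_eq: "sets (distr M N V \<Otimes>\<^sub>M D i) = sets (N \<Otimes>\<^sub>M D i)"
    by (intro sets_pair_measure_cong) auto
  have f': "f \<in> borel_measurable (distr M N V \<Otimes>\<^sub>M D i)"
    using f by (simp add: measurable_cong_sets[OF sets_eq refl])
  have "(\<integral>\<^sup>+w. f (V w, xi i T w) \<partial>M) = (\<integral>\<^sup>+p. f p \<partial>distr M (N \<Otimes>\<^sub>M D i) (\<lambda>w. (V w, xi i T w)))"
    using f by (simp add: nn_integral_distr[OF pm])
  also have "\<dots> = (\<integral>\<^sup>+p. f p \<partial>(distr M N V \<Otimes>\<^sub>M D i))" by (simp add: freeze[OF assms(1)])
  also have "\<dots> = (\<integral>\<^sup>+u. (\<integral>\<^sup>+s. f (u, s) \<partial>D i) \<partial>distr M N V)"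
    by (rule Di.nn_integral_fst[OF f', symmetric])
  also have "\<dots> = (\<integral>\<^sup>+w. (\<integral>\<^sup>+s. f (V w, s) \<partial>D i) \<partial>M)"
    using Di.borel_measurable_nn_integral_fst[OF f] by (simp add: nn_integral_distr[OF Vm])
  finally show ?thesis .
qed

lemma int_freeze:
  fixes f :: "_ \<Rightarrow> real"
  assumes "pre T N V" and f: "f \<in> borel_measurable (N \<Otimes>\<^sub>M D i)"
    and int: "integrable M (\<lambda>w. f (V w, xi i T w))"
  shows "(\<integral>w. f (V w, xi i T w) \<partial>M) = (\<integral>w. (\<integral>s. f (V w, s) \<partial>D i) \<partial>M)"
proof -
  interpret Di: prob_space "D i" by (rule D)
  have Vm: "V \<in> M \<rightarrow>\<^sub>M N" by (rule pre_meas[OF assms(1)])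
  interpret P: pair_sigma_finite "distr M N V" "D i"
    by (intro pair_sigma_finite.intro prob_space_imp_sigma_finite prob_space_distr Vm Di.prob_space_axioms)
  have pm: "(\<lambda>w. (V w, xi i T w)) \<in> M \<rightarrow>\<^sub>M N \<Otimes>\<^sub>M D i"
    using Vm xi_meas by (intro measurable_Pair) auto
  have sets_eq: "sets (distr M N V \<Otimes>\<^sub>M D i) = sets (N \<Otimes>\<^sub>M D i)"
    by (intro sets_pair_measure_cong) auto
  have f': "f \<in> borel_measurable (distr M N V \<Otimes>\<^sub>M D i)"
    using f by (simp add: measurable_cong_sets[OF sets_eq refl])
  have i1: "integrable (distr M (N \<Otimes>\<^sub>M D i) (\<lambda>w. (V w, xi i T w))) f"
    using int by (simp add: integrable_distr_eq[OF pm f])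
  then have i2: "integrable (distr M N V \<Otimes>\<^sub>M D i) f" by (simp add: freeze[OF assms(1)])
  have fm: "(\<lambda>(u, s). f (u, s)) \<in> borel_measurable (N \<Otimes>\<^sub>M D i)" using f by simp
  have "(\<integral>w. f (V w, xi i T w) \<partial>M) = (\<integral>p. f p \<partial>distr M (N \<Otimes>\<^sub>M D i) (\<lambda>w. (V w, xi i T w)))"
    by (rule integral_distr[OF pm f, symmetric])
  also have "\<dots> = (\<integral>p. f p \<partial>(distr M N V \<Otimes>\<^sub>M D i))" by (simp add: freeze[OF assms(1)])
  also have "\<dots> = (\<integral>u. (\<integral>s. f (u, s) \<partial>D i) \<partial>distr M N V)"
    by (rule P.integral_fst'[OF i2, symmetric])
  also have "\<dots> = (\<integral>w. (\<integral>s. f (V w, s) \<partial>D i) \<partial>M)"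
    by (rule integral_distr[OF Vm Di.borel_measurable_lebesgue_integral[OF fm]])
  finally show ?thesis .
qed

end

context fsetup begin

lemma L_nonneg: "L \<ge> 0"
proof (rule ccontr)
  assume "\<not> L \<ge> 0"
  obtain b :: 'a where b: "b \<in> Basis" using nonempty_Basis by blast
  then have "b \<noteq> 0" by (auto simp: nonzero_Basis)
  then have "L * norm (0 - b) < 0" using \<open>\<not> L \<ge> 0\<close> by (simp add: mult_neg_pos)
  with smooth[of undefined 0 b] show False by (meson norm_ge_zero order.trans not_le)
qed

lemma grad_cont: "continuous_on UNIV (grad i)"
proof (rule lipschitz_on_continuous_on)
  show "L-lipschitz_on UNIV (grad i)"
    by (rule lipschitz_onI) (auto simp: dist_norm smooth L_nonneg)
qed

lemma grad_meas[measurable]: "grad i \<in> borel_measurable borel"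
  by (rule borel_measurable_continuous_onI[OF grad_cont])

lemma Gm: "(\<lambda>p. G i (fst p) (snd p)) \<in> borel_measurable (borel \<Otimes>\<^sub>M D i)"
  using G_meas[of i] by (simp add: case_prod_beta')

lemma Gcomp:
  assumes "a \<in> N \<rightarrow>\<^sub>M borel" "b \<in> N \<rightarrow>\<^sub>M D i"
  shows "(\<lambda>x. G i (a x) (b x)) \<in> borel_measurable N"
  using measurable_comp[OF measurable_Pair[OF assms] Gm] by (simp add: comp_def)

lemma noise_meas:
  assumes "a \<in> N \<rightarrow>\<^sub>M borel" "b \<in> N \<rightarrow>\<^sub>M D i"
  shows "(\<lambda>x. G i (a x) (b x) - grad i (a x)) \<in> borel_measurable N"
  by (intro borel_measurable_diff Gcomp assms measurable_compose[OF assms(1) grad_meas])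

lemma sq_meas:
  fixes e :: "_ \<Rightarrow> 'b::real_normed_vector"
  assumes "e \<in> borel_measurable N"
  shows "(\<lambda>x. ennreal ((norm (e x))\<^sup>2)) \<in> borel_measurable N"
  using assms by measurable

lemma noise_nn:
  assumes "pre T borel z"
  shows "(\<integral>\<^sup>+w. ennreal ((norm (G i (z w) (xi i T w) - grad i (z w)))\<^sup>2) \<partial>M) \<le> ennreal (\<sigma>\<^sup>2)"
proof -
  let ?f = "\<lambda>p. ennreal ((norm (G i (fst p) (snd p) - grad i (fst p)))\<^sup>2)"
  have fm: "?f \<in> borel_measurable (borel \<Otimes>\<^sub>M D i)"
    by (intro sq_meas noise_meas measurable_fst measurable_snd)
  have "(\<integral>\<^sup>+w. ennreal ((norm (G i (z w) (xi i T w) - grad i (z w)))\<^sup>2) \<partial>M)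
      = (\<integral>\<^sup>+w. (\<integral>\<^sup>+s. ?f (z w, s) \<partial>D i) \<partial>M)"
    using nn_freeze[OF assms fm] by simp
  also have "\<dots> \<le> (\<integral>\<^sup>+w. ennreal (\<sigma>\<^sup>2) \<partial>M)"
    by (intro nn_integral_mono) (simp add: variance)
  also have "\<dots> = ennreal (\<sigma>\<^sup>2)" by (simp add: emeasure_space_1)
  finally show ?thesis .
qed

lemma noise_int:
  assumes "pre T borel z"
  shows "integrable M (\<lambda>w. (norm (G i (z w) (xi i T w) - grad i (z w)))\<^sup>2)"
    and "(\<integral>w. (norm (G i (z w) (xi i T w) - grad i (z w)))\<^sup>2 \<partial>M) \<le> \<sigma>\<^sup>2"
proof -
  have zm: "z \<in> borel_measurable M" by (rule pre_meas[OF assms])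
  have em: "(\<lambda>w. G i (z w) (xi i T w) - grad i (z w)) \<in> borel_measurable M"
    by (rule noise_meas[OF zm xi_meas])
  then have m: "(\<lambda>w. (norm (G i (z w) (xi i T w) - grad i (z w)))\<^sup>2) \<in> borel_measurable M"
    by measurable
  have nn: "(\<integral>\<^sup>+w. ennreal ((norm (G i (z w) (xi i T w) - grad i (z w)))\<^sup>2) \<partial>M) \<le> ennreal (\<sigma>\<^sup>2)"
    by (rule noise_nn[OF assms])
  show int: "integrable M (\<lambda>w. (norm (G i (z w) (xi i T w) - grad i (z w)))\<^sup>2)"
    unfolding integrable_iff_bounded using m nn by (auto simp: order_le_less_trans[OF _ ennreal_less_top])
  have "ennreal (\<integral>w. (norm (G i (z w) (xi i T w) - grad i (z w)))\<^sup>2 \<partial>M) \<le> ennreal (\<sigma>\<^sup>2)"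
    using nn by (subst nn_integral_eq_integral[OF int, symmetric]) auto
  then show "(\<integral>w. (norm (G i (z w) (xi i T w) - grad i (z w)))\<^sup>2 \<partial>M) \<le> \<sigma>\<^sup>2"
    by (simp add: ennreal_le_iff)
qed

lemma noise_cross:
  fixes h z :: "'w \<Rightarrow> 'a"
  assumes ph: "pre T borel h" and pz: "pre T borel z"
    and hi: "integrable M (\<lambda>w. (norm (h w))\<^sup>2)"
  shows "integrable M (\<lambda>w. h w \<bullet> (G i (z w) (xi i T w) - grad i (z w)))"
    and "(\<integral>w. h w \<bullet> (G i (z w) (xi i T w) - grad i (z w)) \<partial>M) = 0"
proof -
  interpret Di: prob_space "D i" by (rule D)
  have zm: "z \<in> borel_measurable M" by (rule pre_meas[OF pz])
  have hm: "h \<in> borel_measurable M" by (rule pre_meas[OF ph])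
  have em: "(\<lambda>w. G i (z w) (xi i T w) - grad i (z w)) \<in> borel_measurable M"
    by (rule noise_meas[OF zm xi_meas])
  have ei: "integrable M (\<lambda>w. (norm (G i (z w) (xi i T w) - grad i (z w)))\<^sup>2)"
    by (rule noise_int(1)[OF pz])
  show int: "integrable M (\<lambda>w. h w \<bullet> (G i (z w) (xi i T w) - grad i (z w)))"
  proof (rule Bochner_Integration.integrable_bound[OF Bochner_Integration.integrable_add[OF hi ei]])
    show "(\<lambda>w. h w \<bullet> (G i (z w) (xi i T w) - grad i (z w))) \<in> borel_measurable M"
      using hm em by measurable
    show "AE w in M. norm (h w \<bullet> (G i (z w) (xi i T w) - grad i (z w)))
        \<le> norm ((norm (h w))\<^sup>2 + (norm (G i (z w) (xi i T w) - grad i (z w)))\<^sup>2)"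
    proof (intro AE_I2)
      fix w
      let ?a = "h w" and ?b = "G i (z w) (xi i T w) - grad i (z w)"
      have "\<bar>?a \<bullet> ?b\<bar> \<le> norm ?a * norm ?b" by (rule Cauchy_Schwarz_ineq2)
      also have "\<dots> \<le> (norm ?a)\<^sup>2 + (norm ?b)\<^sup>2"
      proof -
        have p: "0 \<le> (norm ?a - norm ?b)\<^sup>2" by simp
        have q: "0 \<le> norm ?a * norm ?b" by simp
        have "(norm ?a - norm ?b)\<^sup>2 = (norm ?a)\<^sup>2 + (norm ?b)\<^sup>2 - 2 * (norm ?a * norm ?b)"
          by (simp add: power2_diff)
        then show ?thesis using p q by linarith
      qed
      finally show "norm (?a \<bullet> ?b) \<le> norm ((norm ?a)\<^sup>2 + (norm ?b)\<^sup>2)" by simp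
    qed
  qed
  have pv: "pre T (borel \<Otimes>\<^sub>M borel) (\<lambda>w. (h w, z w))" by (rule pre_pair[OF ph pz])
  let ?f = "\<lambda>p::('a \<times> 'a) \<times> 's. fst (fst p) \<bullet> (G i (snd (fst p)) (snd p) - grad i (snd (fst p)))"
  have fm: "?f \<in> borel_measurable ((borel \<Otimes>\<^sub>M borel) \<Otimes>\<^sub>M D i)"
  proof -
    have "(\<lambda>p::('a \<times> 'a) \<times> 's. G i (snd (fst p)) (snd p) - grad i (snd (fst p))) \<in> borel_measurable ((borel \<Otimes>\<^sub>M borel) \<Otimes>\<^sub>M D i)"
      by (intro noise_meas measurable_snd measurable_compose[OF measurable_fst measurable_snd])
    then show ?thesis by (intro borel_measurable_inner measurable_compose[OF measurable_fst measurable_fst])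
  qed
  have "(\<integral>w. h w \<bullet> (G i (z w) (xi i T w) - grad i (z w)) \<partial>M) = (\<integral>w. ?f ((h w, z w), xi i T w) \<partial>M)"
    by simp
  also have "\<dots> = (\<integral>w. (\<integral>s. ?f ((h w, z w), s) \<partial>D i) \<partial>M)"
    by (rule int_freeze[OF pv fm]) (use int in simp)
  also have "\<dots> = (\<integral>w. 0 \<partial>M)"
  proof (intro Bochner_Integration.integral_cong refl)
    fix w assume "w \<in> space M"
    have gi: "integrable (D i) (\<lambda>s. G i (z w) s - grad i (z w))"
      using unbiased by auto
    have "(\<integral>s. ?f ((h w, z w), s) \<partial>D i) = h w \<bullet> (\<integral>s. G i (z w) s - grad i (z w) \<partial>D i)"
      using gi by simp
    also have "(\<integral>s. G i (z w) s - grad i (z w) \<partial>D i) = 0"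
    proof -
      have g: "integrable (D i) (\<lambda>s. G i (z w) s)" using unbiased[of i "z w"] by simp
      have c: "integrable (D i) (\<lambda>s. grad i (z w))" by simp
      show ?thesis using unbiased[of i "z w"]
        by (simp add: Bochner_Integration.integral_diff[OF g c] Di.prob_space)
    qed
    finally show "(\<integral>s. ?f ((h w, z w), s) \<partial>D i) = 0" by simp
  qed
  finally show "(\<integral>w. h w \<bullet> (G i (z w) (xi i T w) - grad i (z w)) \<partial>M) = 0" by simp
qed

end

definition Fv :: "('n::finite \<Rightarrow> 'a \<Rightarrow> 'a) \<Rightarrow> 'a^'n \<Rightarrow> 'a^'n" where
  "Fv gr Z = (\<chi> i. gr i (Z$i))"

lemma inner_mix_transpose:
  fixes h e :: "'a::real_inner^'n::finite"
  shows "h \<bullet> mix C e = (\<Sum>i\<in>UNIV. (mix (transpose C) h)$i \<bullet> e$i)"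
proof -
  have "h \<bullet> mix C e = (\<Sum>m\<in>UNIV. \<Sum>i\<in>UNIV. C$m$i * (h$m \<bullet> e$i))"
    by (simp add: inner_vec_def mix_def inner_sum_right)
  also have "\<dots> = (\<Sum>i\<in>UNIV. \<Sum>m\<in>UNIV. C$m$i * (h$m \<bullet> e$i))" by (rule sum.swap)
  also have "\<dots> = (\<Sum>i\<in>UNIV. (mix (transpose C) h)$i \<bullet> e$i)"
    by (simp add: mix_def transpose_def inner_sum_left)
  finally show ?thesis .
qed

lemma norm_nth_le: "norm ((X::'a::real_normed_vector^'n::finite)$i) \<le> norm X"
proof -
  have "(norm (X$i))\<^sup>2 \<le> (norm X)\<^sup>2" unfolding normsq_vec[of X] by (rule member_le_sum) auto
  then show ?thesis by (simp add: power2_le_iff_abs_le)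
qed

lemma ident_meas: "(\<lambda>x. x) \<in> borel_measurable borel" by simp

context fsetup begin

lemma pre_nth: "pre T borel (z :: 'w \<Rightarrow> 'a^'n) \<Longrightarrow> pre T borel (\<lambda>w. z w $ i)"
  by (erule pre_comp) (rule bm_vec_nth[OF ident_meas])

lemma pre_mixnth: "pre T borel (h :: 'w \<Rightarrow> 'a^'n) \<Longrightarrow> pre T borel (\<lambda>w. (mix C (h w)) $ i)"
  by (erule pre_comp) (rule bm_vec_nth[OF bm_mix[OF ident_meas]])

lemma noise_comp: "(norm (sgrad G xi w T Z - Fv grad Z))\<^sup>2
   = (\<Sum>i\<in>UNIV. (norm (G i (Z$i) (xi i T w) - grad i (Z$i)))\<^sup>2)"
  by (simp add: normsq_vec sgrad_def Fv_def)

lemma vnoise: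
  assumes "pre T borel (z :: 'w \<Rightarrow> 'a^'n)"
  shows "integrable M (\<lambda>w. (norm (sgrad G xi w T (z w) - Fv grad (z w)))\<^sup>2)"
    and "(\<integral>w. (norm (sgrad G xi w T (z w) - Fv grad (z w)))\<^sup>2 \<partial>M) \<le> real CARD('n) * \<sigma>\<^sup>2"
proof -
  have pz: "pre T borel (\<lambda>w. z w $ i)" for i by (rule pre_nth[OF assms])
  show "integrable M (\<lambda>w. (norm (sgrad G xi w T (z w) - Fv grad (z w)))\<^sup>2)"
    unfolding noise_comp by (intro Bochner_Integration.integrable_sum noise_int(1)[OF pz])
  have "(\<integral>w. (norm (sgrad G xi w T (z w) - Fv grad (z w)))\<^sup>2 \<partial>M)
      = (\<Sum>i\<in>UNIV. (\<integral>w. (norm (G i (z w $ i) (xi i T w) - grad i (z w $ i)))\<^sup>2 \<partial>M))"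
    unfolding noise_comp by (intro Bochner_Integration.integral_sum noise_int(1)[OF pz])
  also have "\<dots> \<le> (\<Sum>i\<in>(UNIV::'n set). \<sigma>\<^sup>2)"
    by (intro sum_mono noise_int(2)[OF pz])
  finally show "(\<integral>w. (norm (sgrad G xi w T (z w) - Fv grad (z w)))\<^sup>2 \<partial>M) \<le> real CARD('n) * \<sigma>\<^sup>2"
    by simp
qed

lemma vcross:
  fixes h z :: "'w \<Rightarrow> 'a^'n"
  assumes ph: "pre T borel h" and pz: "pre T borel z"
    and hi: "integrable M (\<lambda>w. (norm (h w))\<^sup>2)"
  shows "integrable M (\<lambda>w. h w \<bullet> mix C (sgrad G xi w T (z w) - Fv grad (z w)))"
    and "(\<integral>w. h w \<bullet> mix C (sgrad G xi w T (z w) - Fv grad (z w)) \<partial>M) = 0"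
proof -
  let ?h = "\<lambda>i w. (mix (transpose C) (h w)) $ i"
  have hm: "h \<in> borel_measurable M" by (rule pre_meas[OF ph])
  have ph': "pre T borel (?h i)" for i by (rule pre_mixnth[OF ph])
  have pz': "pre T borel (\<lambda>w. z w $ i)" for i by (rule pre_nth[OF pz])
  have hi': "integrable M (\<lambda>w. (norm (?h i w))\<^sup>2)" for i
  proof (rule Bochner_Integration.integrable_bound[OF integrable_mult_right[OF hi]])
    show "(\<lambda>w. (norm (?h i w))\<^sup>2) \<in> borel_measurable M"
      using pre_meas[OF ph'[of i]] by measurable
    show "AE w in M. norm ((norm (?h i w))\<^sup>2) \<le> norm ((onorm (\<lambda>v. transpose C *v v))\<^sup>2 * (norm (h w))\<^sup>2)"
    proof (intro AE_I2)
      fix w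
      have "(norm (?h i w))\<^sup>2 \<le> (norm (mix (transpose C) (h w)))\<^sup>2"
        by (intro power_mono norm_nth_le) simp
      also have "\<dots> \<le> (onorm (\<lambda>v. transpose C *v v))\<^sup>2 * (norm (h w))\<^sup>2" by (rule mix_bound)
      finally show "norm ((norm (?h i w))\<^sup>2) \<le> norm ((onorm (\<lambda>v. transpose C *v v))\<^sup>2 * (norm (h w))\<^sup>2)"
        by simp
    qed
  qed
  have eq: "h w \<bullet> mix C (sgrad G xi w T (z w) - Fv grad (z w))
     = (\<Sum>i\<in>UNIV. ?h i w \<bullet> (G i (z w $ i) (xi i T w) - grad i (z w $ i)))" for w
    by (simp add: inner_mix_transpose sgrad_def Fv_def)
  show "integrable M (\<lambda>w. h w \<bullet> mix C (sgrad G xi w T (z w) - Fv grad (z w)))"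
    unfolding eq by (intro Bochner_Integration.integrable_sum noise_cross(1)[OF ph' pz' hi'])
  show "(\<integral>w. h w \<bullet> mix C (sgrad G xi w T (z w) - Fv grad (z w)) \<partial>M) = 0"
    unfolding eq by (subst Bochner_Integration.integral_sum) (auto intro: noise_cross(1)[OF ph' pz' hi'] simp: noise_cross(2)[OF ph' pz' hi'])
qed

end

lemma inner_snd:
  "snd (inner G xi w \<gamma> \<beta> k X Y j) = Y + sgrad G xi w (\<beta> * k + j) X - sgrad G xi w (\<beta> * k) X"
proof (induction j)
  case 0 then show ?case by simp
next
  case (Suc j)
  obtain X' Y' where e: "inner G xi w \<gamma> \<beta> k X Y j = (X', Y')" by (cases "inner G xi w \<gamma> \<beta> k X Y j")
  with Suc show ?case by (simp add: e algebra_simps)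
qed

lemma rounds_Suc_fst:
  "fst (rounds Wb G xi \<gamma> \<beta> x0 (Suc k) w) = mix Wb (fst (rounds Wb G xi \<gamma> \<beta> x0 k w)
     - \<gamma> *\<^sub>R (\<Sum>j<\<beta>. snd (inner G xi w \<gamma> \<beta> k (fst (rounds Wb G xi \<gamma> \<beta> x0 k w)) (snd (rounds Wb G xi \<gamma> \<beta> x0 k w)) j)))"
  by (cases "rounds Wb G xi \<gamma> \<beta> x0 k w") (simp add: Let_def)

lemma rounds_Suc_snd:
  "snd (rounds Wb G xi \<gamma> \<beta> x0 (Suc k) w) = mix Wb (snd (rounds Wb G xi \<gamma> \<beta> x0 k w)
     + sgrad G xi w (\<beta> * (k + 1)) (fst (rounds Wb G xi \<gamma> \<beta> x0 (Suc k) w))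
     - sgrad G xi w (\<beta> * k) (fst (rounds Wb G xi \<gamma> \<beta> x0 k w)))"
  by (cases "rounds Wb G xi \<gamma> \<beta> x0 k w") (simp add: Let_def)

lemma flexgt_round: "\<beta> \<ge> 1 \<Longrightarrow> flexgt Wb G xi \<gamma> \<beta> x0 (\<beta> * k) w = rounds Wb G xi \<gamma> \<beta> x0 k w"
  by (cases "rounds Wb G xi \<gamma> \<beta> x0 k w") (simp add: flexgt_def Let_def)

lemma mixWJ: "rowst C \<Longrightarrow> mix C (dev e) = mix (C - Jmat) (e :: 'a::real_vector^'n::finite)"
  by (simp add: dev_eq mix_diff mix_cvec mix_mat_diff mix_J)

lemma dev_as_mix: "dev e = mix (mat 1 - Jmat) (e :: 'a::real_vector^'n::finite)"
proof -
  have "(\<Sum>j\<in>UNIV. (mat 1 $ i $ j) *\<^sub>R e$j) = e$i" for i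
  proof -
    have "(\<Sum>j\<in>UNIV. (mat 1 $ i $ j) *\<^sub>R e$j) = (\<Sum>j\<in>UNIV. if j = i then e$j else 0)"
      by (intro sum.cong) (auto simp: mat_def)
    then show ?thesis by simp
  qed
  then have "mix (mat 1) e = e"
    by (simp add: mix_def vec_eq_iff)
  then show ?thesis by (simp add: mix_mat_diff mix_J dev_eq)
qed

locale falg = fsetup M D xi G grad \<sigma> L
  for M :: "'w measure" and D :: "'n::finite \<Rightarrow> 's measure" and xi G
    and grad :: "'n \<Rightarrow> 'a::euclidean_space \<Rightarrow> 'a" and \<sigma> L +
  fixes Wb :: "real^'n^'n" and \<gamma> :: real and \<beta> :: nat and x0 :: "'a^'n"
  assumes Wrow: "rowst Wb" and Wcol: "colst Wb" and Prho: "rho_of Wb < 1" and beta1: "\<beta> \<ge> 1"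
begin

definition xk where "xk k w = fst (rounds Wb G xi \<gamma> \<beta> x0 k w)"
definition yk where "yk k w = snd (rounds Wb G xi \<gamma> \<beta> x0 k w)"
definition ej where "ej k j w = sgrad G xi w (\<beta> * k + j) (xk k w) - Fv grad (xk k w)"
definition ek where "ek k w = sgrad G xi w (\<beta> * k) (xk k w) - Fv grad (xk k w)"
definition Fk where "Fk k w = Fv grad (xk k w)"
definition vk where "vk k w = yk k w - ek k w"
definition Ak where "Ak k w = mix Wb (dev (vk k w + Fk (Suc k) w - Fk k w))"
definition Sk where "Sk k w = (\<Sum>j<\<beta>. snd (inner G xi w \<gamma> \<beta> k (xk k w) (yk k w) j))"

lemma xk0: "xk 0 w = x0" by (simp add: xk_def)
lemma yk0: "yk 0 w = sgrad G xi w 0 x0" by (simp add: yk_def)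

lemma xk_Suc: "xk (Suc k) w = mix Wb (xk k w - \<gamma> *\<^sub>R Sk k w)"
  unfolding xk_def yk_def Sk_def by (rule rounds_Suc_fst)

lemma yk_Suc: "yk (Suc k) w = mix Wb (yk k w + sgrad G xi w (\<beta> * Suc k) (xk (Suc k) w) - sgrad G xi w (\<beta> * k) (xk k w))"
  using rounds_Suc_snd[of Wb G xi \<gamma> \<beta> x0 k w] by (simp add: xk_def yk_def)

lemma ej0: "ej k 0 w = ek k w" by (simp add: ej_def ek_def)

lemma Sk_eq: "Sk k w = real \<beta> *\<^sub>R vk k w + (\<Sum>j<\<beta>. ej k j w)"
proof -
  have "Sk k w = (\<Sum>j<\<beta>. yk k w - ek k w + ej k j w)"
    unfolding Sk_def inner_snd by (intro sum.cong refl) (simp add: ej_def ek_def algebra_simps)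
  also have "\<dots> = real \<beta> *\<^sub>R vk k w + (\<Sum>j<\<beta>. ej k j w)"
    by (simp add: sum.distrib vk_def sum_constant_scaleR)
  finally show ?thesis .
qed

lemma yk_Suc': "yk (Suc k) w = mix Wb (vk k w + Fk (Suc k) w - Fk k w + ek (Suc k) w)"
  unfolding yk_Suc by (simp add: vk_def Fk_def ek_def algebra_simps)

lemma dev_yk_Suc: "dev (yk (Suc k) w) = Ak k w + mix (Wb - Jmat) (ek (Suc k) w)"
  unfolding yk_Suc' dev_mix[OF Wrow Wcol] dev_add mix_add Ak_def mixWJ[OF Wrow] ..

lemma dev_vk_Suc: "dev (vk (Suc k) w) = Ak k w + mix (Wb - mat 1) (ek (Suc k) w)"
proof -
  have "dev (vk (Suc k) w) = dev (yk (Suc k) w) - dev (ek (Suc k) w)"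
    by (simp add: vk_def dev_diff)
  also have "\<dots> = Ak k w + mix (Wb - Jmat) (ek (Suc k) w) - mix (mat 1 - Jmat) (ek (Suc k) w)"
    by (simp add: dev_yk_Suc dev_as_mix[of "ek (Suc k) w"])
  also have "\<dots> = Ak k w + mix (Wb - mat 1) (ek (Suc k) w)"
    by (simp add: mix_mat_diff)
  finally show ?thesis .
qed

lemma avg_yk: "avg (yk k w) = avg (sgrad G xi w (\<beta> * k) (xk k w))"
proof (induction k)
  case 0 then show ?case by (simp add: xk0 yk0)
next
  case (Suc k) then show ?case
    by (simp add: yk_Suc avg_mix[OF Wcol] avg_add avg_diff)
qed

lemma avg_vk: "avg (vk k w) = avg (Fk k w)"
  by (simp add: vk_def avg_diff avg_yk ek_def Fk_def)

lemma dev_vk0: "dev (yk 0 w) = dev (Fk 0 w) + mix (mat 1 - Jmat) (ek 0 w)"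
  by (simp add: yk0 Fk_def ek_def xk0 flip: dev_as_mix dev_add)

lemma dx_eq: "xk (Suc k) w - xk k w = (mix Wb (dev (xk k w)) - dev (xk k w)) - \<gamma> *\<^sub>R mix Wb (Sk k w)"
proof -
  have x: "xk k w = cvec (avg (xk k w)) + dev (xk k w)" by (simp add: dev_eq)
  have "mix Wb (xk k w) = cvec (avg (xk k w)) + mix Wb (dev (xk k w))"
    by (subst x) (simp add: mix_add mix_cvec[OF Wrow])
  then show ?thesis unfolding xk_Suc mix_diff mix_scaleR
    by (subst (2) x) (simp add: algebra_simps)
qed

end

lemma sq_add_le: "(norm (a + b))\<^sup>2 \<le> 2 * (norm a)\<^sup>2 + 2 * (norm (b::'b::real_normed_vector))\<^sup>2"
proof -
  have "norm (a + b) \<le> norm a + norm b" by (rule norm_triangle_ineq)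
  then have "(norm (a + b))\<^sup>2 \<le> (norm a + norm b)\<^sup>2" by (intro power_mono) auto
  also have "\<dots> \<le> 2 * (norm a)\<^sup>2 + 2 * (norm b)\<^sup>2"
    using power2_diff[of "norm a" "norm b"] zero_le_power2[of "norm a - norm b"]
    by (simp add: power2_sum)
  finally show ?thesis .
qed

lemma sq_diff_le: "(norm (a - b))\<^sup>2 \<le> 2 * (norm a)\<^sup>2 + 2 * (norm (b::'b::real_normed_vector))\<^sup>2"
  using sq_add_le[of a "-b"] by simp

context fsetup begin

definition SQ :: "('w \<Rightarrow> 'b::{real_normed_vector, second_countable_topology}) \<Rightarrow> bool" where
  "SQ f \<longleftrightarrow> f \<in> borel_measurable M \<and> integrable M (\<lambda>w. (norm (f w))\<^sup>2)"

lemma SQ_bound: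
  assumes "f \<in> borel_measurable M" "integrable M g" "\<And>w. (norm (f w))\<^sup>2 \<le> g w"
  shows "SQ f"
  unfolding SQ_def
proof
  show "f \<in> borel_measurable M" by fact
  show "integrable M (\<lambda>w. (norm (f w))\<^sup>2)"
  proof (rule Bochner_Integration.integrable_bound[OF assms(2)])
    show "(\<lambda>w. (norm (f w))\<^sup>2) \<in> borel_measurable M" using assms(1) by measurable
    show "AE w in M. norm ((norm (f w))\<^sup>2) \<le> norm (g w)"
      using assms(3) by (intro AE_I2) (smt (verit) real_norm_def zero_le_power2)
  qed
qed

lemma SQ_const: "SQ (\<lambda>w. c)"
  unfolding SQ_def by simp

lemma SQ_add: "SQ f \<Longrightarrow> SQ g \<Longrightarrow> SQ (\<lambda>w. f w + g w)"
  unfolding SQ_def[of f] SQ_def[of g]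
  by (intro SQ_bound[where g="\<lambda>w. 2 * (norm (f w))\<^sup>2 + 2 * (norm (g w))\<^sup>2"] borel_measurable_add
      Bochner_Integration.integrable_add integrable_mult_right sq_add_le) auto

lemma SQ_diff: "SQ f \<Longrightarrow> SQ g \<Longrightarrow> SQ (\<lambda>w. f w - g w)"
  unfolding SQ_def[of f] SQ_def[of g]
  by (intro SQ_bound[where g="\<lambda>w. 2 * (norm (f w))\<^sup>2 + 2 * (norm (g w))\<^sup>2"] borel_measurable_diff
      Bochner_Integration.integrable_add integrable_mult_right sq_diff_le) auto

lemma SQ_scaleR: "SQ f \<Longrightarrow> SQ (\<lambda>w. c *\<^sub>R f w)"
  unfolding SQ_def[of f]
  by (intro SQ_bound[where g="\<lambda>w. c\<^sup>2 * (norm (f w))\<^sup>2"] borel_measurable_scaleR borel_measurable_const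
      integrable_mult_right) (auto simp: power_mult_distrib)

lemma SQ_mix: "SQ f \<Longrightarrow> SQ (\<lambda>w. mix C (f w :: 'a^'n))"
  unfolding SQ_def[of f]
  by (intro SQ_bound[where g="\<lambda>w. (onorm (\<lambda>v. C *v v))\<^sup>2 * (norm (f w))\<^sup>2"] bm_mix
      integrable_mult_right mix_bound) auto

lemma SQ_dev: "SQ f \<Longrightarrow> SQ (\<lambda>w. dev (f w :: 'a^'n))"
  unfolding SQ_def[of f]
  by (intro SQ_bound[where g="\<lambda>w. (norm (f w))\<^sup>2"] bm_dev) (auto intro: power_mono norm_dev_le)

lemma SQ_sum: "finite A \<Longrightarrow> (\<And>j. j \<in> A \<Longrightarrow> SQ (f j)) \<Longrightarrow> SQ (\<lambda>w. \<Sum>j\<in>A. f j w)"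
  by (induction A rule: finite_induct) (auto intro: SQ_add SQ_const)

lemma SQ_meas: "SQ f \<Longrightarrow> f \<in> borel_measurable M" by (simp add: SQ_def)
lemma SQ_int: "SQ f \<Longrightarrow> integrable M (\<lambda>w. (norm (f w))\<^sup>2)" by (simp add: SQ_def)

lemma SQ_inner: "SQ f \<Longrightarrow> SQ g \<Longrightarrow> integrable M (\<lambda>w. f w \<bullet> (g w :: 'b::{real_inner, second_countable_topology}))"
  unfolding SQ_def
proof (elim conjE, rule Bochner_Integration.integrable_bound[OF Bochner_Integration.integrable_add])
  assume f: "f \<in> borel_measurable M" "integrable M (\<lambda>w. (norm (f w))\<^sup>2)"
    and g: "g \<in> borel_measurable M" "integrable M (\<lambda>w. (norm (g w))\<^sup>2)"
  show "integrable M (\<lambda>w. (norm (f w))\<^sup>2)" "integrable M (\<lambda>w. (norm (g w))\<^sup>2)" by fact+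
  show "(\<lambda>w. f w \<bullet> g w) \<in> borel_measurable M" using f g by measurable
  show "AE w in M. norm (f w \<bullet> g w) \<le> norm ((norm (f w))\<^sup>2 + (norm (g w))\<^sup>2)"
  proof (intro AE_I2)
    fix w
    have "\<bar>f w \<bullet> g w\<bar> \<le> norm (f w) * norm (g w)" by (rule Cauchy_Schwarz_ineq2)
    also have "\<dots> \<le> (norm (f w))\<^sup>2 + (norm (g w))\<^sup>2"
    proof -
      have p: "0 \<le> (norm (f w) - norm (g w))\<^sup>2" by simp
      have q: "0 \<le> norm (f w) * norm (g w)" by simp
      have "(norm (f w) - norm (g w))\<^sup>2 = (norm (f w))\<^sup>2 + (norm (g w))\<^sup>2 - 2 * (norm (f w) * norm (g w))"
        by (simp add: power2_diff)
      then show ?thesis using p q by linarith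
    qed
    finally show "norm (f w \<bullet> g w) \<le> norm ((norm (f w))\<^sup>2 + (norm (g w))\<^sup>2)" by simp
  qed
qed

lemma bm_Fv: "f \<in> borel_measurable N \<Longrightarrow> (\<lambda>x. Fv grad (f x :: 'a^'n)) \<in> borel_measurable N"
  unfolding Fv_def by (intro bm_vec_lambda measurable_compose[OF bm_vec_nth grad_meas])

lemma Fv_lip: "(norm (Fv grad Z - Fv grad Z'))\<^sup>2 \<le> L\<^sup>2 * (norm (Z - Z' :: 'a^'n))\<^sup>2"
proof -
  have "(norm (Fv grad Z - Fv grad Z'))\<^sup>2 = (\<Sum>i\<in>UNIV. (norm (grad i (Z$i) - grad i (Z'$i)))\<^sup>2)"
    by (simp add: normsq_vec Fv_def)
  also have "\<dots> \<le> (\<Sum>i\<in>UNIV. L\<^sup>2 * (norm (Z$i - Z'$i))\<^sup>2)"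
  proof (intro sum_mono)
    fix i
    have "(norm (grad i (Z$i) - grad i (Z'$i)))\<^sup>2 \<le> (L * norm (Z$i - Z'$i))\<^sup>2"
      by (intro power_mono smooth) auto
    then show "(norm (grad i (Z$i) - grad i (Z'$i)))\<^sup>2 \<le> L\<^sup>2 * (norm (Z$i - Z'$i))\<^sup>2"
      by (simp add: power_mult_distrib)
  qed
  also have "\<dots> = L\<^sup>2 * (norm (Z - Z'))\<^sup>2"
    by (simp add: normsq_vec sum_distrib_left)
  finally show ?thesis .
qed

lemma SQ_Fv: "SQ z \<Longrightarrow> SQ (\<lambda>w. Fv grad (z w :: 'a^'n))"
proof -
  assume z: "SQ z"
  have "SQ (\<lambda>w. Fv grad (z w) - Fv grad 0)"
  proof (rule SQ_bound[where g="\<lambda>w. L\<^sup>2 * (norm (z w))\<^sup>2"])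
    show "(\<lambda>w. Fv grad (z w) - Fv grad 0) \<in> borel_measurable M"
      using z by (intro borel_measurable_diff bm_Fv borel_measurable_const) (simp add: SQ_def)
    show "integrable M (\<lambda>w. L\<^sup>2 * (norm (z w))\<^sup>2)" using z by (simp add: SQ_def)
    show "(norm (Fv grad (z w) - Fv grad 0))\<^sup>2 \<le> L\<^sup>2 * (norm (z w))\<^sup>2" for w
      using Fv_lip[of "z w" 0] by simp
  qed
  from SQ_add[OF this SQ_const[of "Fv grad 0"]] show ?thesis by simp
qed

lemma sgrad_meas: "z \<in> borel_measurable M \<Longrightarrow> (\<lambda>w. sgrad G xi w t (z w :: 'a^'n)) \<in> borel_measurable M"
  unfolding sgrad_def by (intro bm_vec_lambda Gcomp bm_vec_nth xi_meas)

lemma SQ_noise: "pre T borel z \<Longrightarrow> SQ (\<lambda>w. sgrad G xi w T (z w) - Fv grad (z w :: 'a^'n))"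
  unfolding SQ_def
  by (intro conjI borel_measurable_diff sgrad_meas bm_Fv pre_meas vnoise(1)) auto

lemma SQ_sgrad: "pre T borel z \<Longrightarrow> SQ z \<Longrightarrow> SQ (\<lambda>w. sgrad G xi w T (z w :: 'a^'n))"
  using SQ_add[OF SQ_noise[of T z] SQ_Fv[of z]] by simp

lemma expand_cross:
  fixes h z :: "'w \<Rightarrow> 'a^'n"
  assumes ph: "pre T borel h" and hs: "SQ h" and pz: "pre T borel z"
  shows "(\<integral>w. (norm (h w + mix C (sgrad G xi w T (z w) - Fv grad (z w))))\<^sup>2 \<partial>M)
       = (\<integral>w. (norm (h w))\<^sup>2 \<partial>M) + (\<integral>w. (norm (mix C (sgrad G xi w T (z w) - Fv grad (z w))))\<^sup>2 \<partial>M)"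
proof -
  let ?b = "\<lambda>w. mix C (sgrad G xi w T (z w) - Fv grad (z w))"
  have bs: "SQ ?b" by (intro SQ_mix SQ_noise pz)
  have hi: "integrable M (\<lambda>w. (norm (h w))\<^sup>2)" using hs by (simp add: SQ_def)
  have eq: "(norm (h w + ?b w))\<^sup>2 = (norm (h w))\<^sup>2 + 2 * (h w \<bullet> ?b w) + (norm (?b w))\<^sup>2" for w
    by (simp add: power2_norm_eq_inner inner_add_left inner_add_right inner_commute)
  have "(\<integral>w. (norm (h w + ?b w))\<^sup>2 \<partial>M) = (\<integral>w. (norm (h w))\<^sup>2 + 2 * (h w \<bullet> ?b w) + (norm (?b w))\<^sup>2 \<partial>M)"
    by (simp add: eq)
  also have "\<dots> = (\<integral>w. (norm (h w))\<^sup>2 \<partial>M) + 2 * (\<integral>w. h w \<bullet> ?b w \<partial>M) + (\<integral>w. (norm (?b w))\<^sup>2 \<partial>M)"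
    using hi vcross(1)[OF ph pz hi, of C] SQ_int[OF bs] by simp
  also have "(\<integral>w. h w \<bullet> ?b w \<partial>M) = 0" by (rule vcross(2)[OF ph pz hi])
  finally show ?thesis by simp
qed

lemma pre_add: "pre T borel f \<Longrightarrow> pre T borel g \<Longrightarrow> pre T borel (\<lambda>w. f w + (g w :: 'b::{real_normed_vector, second_countable_topology}))"
  using pre_comp[OF pre_pair, of T borel f borel g "\<lambda>p. fst p + snd p" borel]
  by (simp add: borel_measurable_add[OF measurable_fst measurable_snd])

lemma pre_diff: "pre T borel f \<Longrightarrow> pre T borel g \<Longrightarrow> pre T borel (\<lambda>w. f w - (g w :: 'b::{real_normed_vector, second_countable_topology}))"
  using pre_comp[OF pre_pair, of T borel f borel g "\<lambda>p. fst p - snd p" borel]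
  by (simp add: borel_measurable_diff[OF measurable_fst measurable_snd])

lemma pre_scaleR: "pre T borel f \<Longrightarrow> pre T borel (\<lambda>w. c *\<^sub>R (f w :: 'b::{real_normed_vector, second_countable_topology}))"
  by (erule pre_comp) (intro borel_measurable_scaleR borel_measurable_const ident_meas)

lemma pre_mix: "pre T borel f \<Longrightarrow> pre T borel (\<lambda>w. mix C (f w :: 'a^'n))"
  by (erule pre_comp) (rule bm_mix[OF ident_meas])

lemma pre_dev: "pre T borel f \<Longrightarrow> pre T borel (\<lambda>w. dev (f w :: 'a^'n))"
  by (erule pre_comp) (rule bm_dev[OF ident_meas])

lemma pre_Fv: "pre T borel f \<Longrightarrow> pre T borel (\<lambda>w. Fv grad (f w :: 'a^'n))"
  by (erule pre_comp) (rule bm_Fv[OF ident_meas])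

end

lemma rl1:
  fixes P p q :: real
  assumes "0 \<le> P" "P < 1" "0 \<le> p" "0 \<le> q"
  shows "P * (p + q)\<^sup>2 \<le> (1 + P) / 2 * p\<^sup>2 + 2 * P / (1 - P) * q\<^sup>2"
proof -
  have h: "0 \<le> ((1 - P) * p - 2 * P * q)\<^sup>2 + 2 * P * (1 - P) * q\<^sup>2"
    using assms by (intro add_nonneg_nonneg) auto
  have "2 * (1 - P) * (P * (p + q)\<^sup>2) \<le> 2 * (1 - P) * ((1 + P) / 2 * p\<^sup>2 + 2 * P / (1 - P) * q\<^sup>2)"
  proof -
    have "2 * (1 - P) * ((1 + P) / 2 * p\<^sup>2 + 2 * P / (1 - P) * q\<^sup>2) - 2 * (1 - P) * (P * (p + q)\<^sup>2)
        = ((1 - P) * p - 2 * P * q)\<^sup>2 + 2 * P * (1 - P) * q\<^sup>2"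
      using assms by (simp add: field_simps power2_eq_square)
    then show ?thesis using h by linarith
  qed
  then show ?thesis using assms by (simp add: mult_le_cancel_left_pos)
qed

lemma norm_sum_sq:
  fixes u :: "'i \<Rightarrow> 'b::real_normed_vector"
  shows "(norm (\<Sum>j\<in>A. u j))\<^sup>2 \<le> real (card A) * (\<Sum>j\<in>A. (norm (u j))\<^sup>2)"
proof -
  have "(norm (\<Sum>j\<in>A. u j))\<^sup>2 \<le> (\<Sum>j\<in>A. norm (u j))\<^sup>2"
    by (intro power_mono norm_sum) auto
  also have "\<dots> \<le> (\<Sum>j\<in>A. (norm (u j))\<^sup>2) * real (card A)"
    by (rule sum_squared_le_sum_of_squares)
  finally show ?thesis by (simp add: mult.commute)
qed

definition gf :: "('n::finite \<Rightarrow> 'a \<Rightarrow> 'a::real_vector) \<Rightarrow> 'a \<Rightarrow> 'a" where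
  "gf gr a = (1 / real CARD('n)) *\<^sub>R (\<Sum>i\<in>UNIV. gr i a)"

context fsetup begin

lemma avgF_bound:
  fixes x :: "'a^'n"
  shows "real CARD('n) * (norm (avg (Fv grad x)))\<^sup>2
     \<le> 2 * real CARD('n) * (norm (gf grad (avg x)))\<^sup>2 + 2 * L\<^sup>2 * (norm (dev x))\<^sup>2"
proof -
  let ?n = "real CARD('n)"
  have n0: "?n > 0" by simp
  let ?d = "avg (Fv grad x) - gf grad (avg x)"
  have d: "?d = (1 / ?n) *\<^sub>R (\<Sum>i\<in>UNIV. grad i (x$i) - grad i (avg x))"
    by (simp add: avg_def gf_def Fv_def sum_subtractf scaleR_diff_right)
  have "(norm ?d)\<^sup>2 = (1 / ?n)\<^sup>2 * (norm (\<Sum>i\<in>UNIV. grad i (x$i) - grad i (avg x)))\<^sup>2"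
    by (simp add: d power_mult_distrib power_divide)
  also have "\<dots> \<le> (1 / ?n)\<^sup>2 * (?n * (\<Sum>i\<in>UNIV. (norm (grad i (x$i) - grad i (avg x)))\<^sup>2))"
    by (intro mult_left_mono) (auto intro: order_trans[OF norm_sum_sq])
  also have "\<dots> \<le> (1 / ?n)\<^sup>2 * (?n * (\<Sum>i\<in>UNIV. L\<^sup>2 * (norm (x$i - avg x))\<^sup>2))"
  proof (intro mult_left_mono sum_mono)
    fix i
    have "(norm (grad i (x$i) - grad i (avg x)))\<^sup>2 \<le> (L * norm (x$i - avg x))\<^sup>2"
      by (intro power_mono smooth) auto
    then show "(norm (grad i (x$i) - grad i (avg x)))\<^sup>2 \<le> L\<^sup>2 * (norm (x$i - avg x))\<^sup>2"
      by (simp add: power_mult_distrib)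
  qed auto
  also have "\<dots> = (1 / ?n)\<^sup>2 * (?n * (L\<^sup>2 * (\<Sum>i\<in>UNIV. (norm (x$i - avg x))\<^sup>2)))"
    by (simp only: sum_distrib_left)
  also have "(\<Sum>i\<in>UNIV. (norm (x$i - avg x))\<^sup>2) = (norm (dev x))\<^sup>2"
    by (simp add: normsq_vec dev_def)
  also have "(1 / ?n)\<^sup>2 * (?n * (L\<^sup>2 * (norm (dev x))\<^sup>2)) = L\<^sup>2 * (norm (dev x))\<^sup>2 / ?n"
    using n0 by (simp add: power2_eq_square field_simps)
  finally have dd: "?n * (norm ?d)\<^sup>2 \<le> L\<^sup>2 * (norm (dev x))\<^sup>2"
    using n0 by (simp add: field_simps)
  have "(norm (avg (Fv grad x)))\<^sup>2 \<le> 2 * (norm (gf grad (avg x)))\<^sup>2 + 2 * (norm ?d)\<^sup>2"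
    using sq_add_le[of "gf grad (avg x)" ?d] by simp
  then have "?n * (norm (avg (Fv grad x)))\<^sup>2 \<le> ?n * (2 * (norm (gf grad (avg x)))\<^sup>2 + 2 * (norm ?d)\<^sup>2)"
    using n0 by (intro mult_left_mono) auto
  then show ?thesis using dd by (simp add: algebra_simps)
qed

end

lemma combine:
  fixes P L \<gamma> \<beta> n a X g es A dx S2 v2 q2 :: real
  assumes P: "0 \<le> P" "P < 1" and nn: "0 \<le> L" "0 \<le> \<gamma>" "0 \<le> \<beta>" "0 \<le> n" "0 \<le> a" "0 \<le> X" "0 \<le> g" "0 \<le> es"
    and h1: "A \<le> (1 + P) / 2 * a + 2 * P / (1 - P) * q2"
    and h2: "q2 \<le> L\<^sup>2 * dx"
    and h3: "dx \<le> 8 * X + 2 * \<gamma>\<^sup>2 * S2"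
    and h4: "S2 \<le> 2 * \<beta>\<^sup>2 * v2 + 2 * \<beta> * es"
    and h5: "v2 \<le> a + 2 * n * g + 2 * L\<^sup>2 * X"
    and c1: "196 * P * L\<^sup>2 * \<gamma>\<^sup>2 * \<beta>\<^sup>2 \<le> (1 - P)\<^sup>2"
    and c2: "16 * \<beta>\<^sup>2 * L\<^sup>2 * \<gamma>\<^sup>2 \<le> 1"
  shows "A \<le> (3 + P) / 4 * a + 17 * P * L\<^sup>2 / (1 - P) * X
     + 16 * n * P * L\<^sup>2 * \<gamma>\<^sup>2 * \<beta>\<^sup>2 / (1 - P) * g + 8 * P * L\<^sup>2 * \<gamma>\<^sup>2 * \<beta> / (1 - P) * es"
proof -
  define K where "K = 2 * P / (1 - P)"
  have K0: "K \<ge> 0" using P by (simp add: K_def)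
  have "A \<le> (1 + P) / 2 * a + K * (L\<^sup>2 * dx)"
    using h1 h2 K0 unfolding K_def by (smt (verit) mult_left_mono)
  also have "\<dots> \<le> (1 + P) / 2 * a + K * (L\<^sup>2 * (8 * X + 2 * \<gamma>\<^sup>2 * S2))"
    using h3 K0 by (intro add_left_mono mult_left_mono) auto
  also have "\<dots> \<le> (1 + P) / 2 * a + K * (L\<^sup>2 * (8 * X + 2 * \<gamma>\<^sup>2 * (2 * \<beta>\<^sup>2 * v2 + 2 * \<beta> * es)))"
    using h4 K0 by (intro add_left_mono mult_left_mono) auto
  also have "\<dots> \<le> (1 + P) / 2 * a + K * (L\<^sup>2 * (8 * X + 2 * \<gamma>\<^sup>2 * (2 * \<beta>\<^sup>2 * (a + 2 * n * g + 2 * L\<^sup>2 * X) + 2 * \<beta> * es)))"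
  proof -
    have "\<beta>\<^sup>2 * v2 \<le> \<beta>\<^sup>2 * (a + 2 * n * g + 2 * L\<^sup>2 * X)" using h5 by (intro mult_left_mono) auto
    then show ?thesis using K0 by (intro add_left_mono mult_left_mono) auto
  qed
  also have "\<dots> = ((1 + P) / 2 + 4 * K * L\<^sup>2 * \<gamma>\<^sup>2 * \<beta>\<^sup>2) * a + (K * L\<^sup>2 * (8 + 8 * (\<gamma>\<^sup>2 * \<beta>\<^sup>2 * L\<^sup>2))) * X
      + 8 * K * L\<^sup>2 * \<gamma>\<^sup>2 * \<beta>\<^sup>2 * n * g + 4 * K * L\<^sup>2 * \<gamma>\<^sup>2 * \<beta> * es"
    by (simp add: algebra_simps)
  also have "\<dots> \<le> (3 + P) / 4 * a + 17 * P * L\<^sup>2 / (1 - P) * X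
     + 16 * n * P * L\<^sup>2 * \<gamma>\<^sup>2 * \<beta>\<^sup>2 / (1 - P) * g + 8 * P * L\<^sup>2 * \<gamma>\<^sup>2 * \<beta> / (1 - P) * es"
  proof -
    have e1: "4 * K * L\<^sup>2 * \<gamma>\<^sup>2 * \<beta>\<^sup>2 \<le> (1 - P) / 4"
    proof -
      have "4 * K * L\<^sup>2 * \<gamma>\<^sup>2 * \<beta>\<^sup>2 = 8 * (P * L\<^sup>2 * \<gamma>\<^sup>2 * \<beta>\<^sup>2) / (1 - P)"
        by (simp add: K_def)
      also have "\<dots> \<le> 8 * ((1 - P)\<^sup>2 / 196) / (1 - P)"
        using c1 P by (intro divide_right_mono mult_left_mono) auto
      also have "\<dots> = 2 * (1 - P) / 49" using P by (simp add: power2_eq_square field_simps)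
      also have "\<dots> \<le> (1 - P) / 4" using P by simp
      finally show ?thesis .
    qed
    have e2: "K * L\<^sup>2 * (8 + 8 * (\<gamma>\<^sup>2 * \<beta>\<^sup>2 * L\<^sup>2)) \<le> 17 * P * L\<^sup>2 / (1 - P)"
    proof -
      have "\<gamma>\<^sup>2 * \<beta>\<^sup>2 * L\<^sup>2 \<le> 1 / 16" using c2 by (simp add: algebra_simps)
      then have "K * L\<^sup>2 * (8 + 8 * (\<gamma>\<^sup>2 * \<beta>\<^sup>2 * L\<^sup>2)) \<le> K * L\<^sup>2 * (8 + 8 * (1 / 16))"
        using K0 by (intro mult_left_mono) auto
      also have "\<dots> = 17 * P * L\<^sup>2 / (1 - P)" using P by (simp add: K_def field_simps)
      finally show ?thesis .
    qed
    have e3: "8 * K * L\<^sup>2 * \<gamma>\<^sup>2 * \<beta>\<^sup>2 * n = 16 * n * P * L\<^sup>2 * \<gamma>\<^sup>2 * \<beta>\<^sup>2 / (1 - P)"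
      by (simp add: K_def)
    have e4: "4 * K * L\<^sup>2 * \<gamma>\<^sup>2 * \<beta> = 8 * P * L\<^sup>2 * \<gamma>\<^sup>2 * \<beta> / (1 - P)"
      by (simp add: K_def)
    have "((1 + P) / 2 + 4 * K * L\<^sup>2 * \<gamma>\<^sup>2 * \<beta>\<^sup>2) * a \<le> (3 + P) / 4 * a"
    proof -
      have "(1 + P) / 2 + 4 * K * L\<^sup>2 * \<gamma>\<^sup>2 * \<beta>\<^sup>2 \<le> (3 + P) / 4"
        by (rule order_trans[OF add_left_mono[OF e1]]) (simp add: field_simps)
      then show ?thesis using nn by (intro mult_right_mono) auto
    qed
    moreover have "(K * L\<^sup>2 * (8 + 8 * (\<gamma>\<^sup>2 * \<beta>\<^sup>2 * L\<^sup>2))) * X \<le> 17 * P * L\<^sup>2 / (1 - P) * X"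
      using e2 nn by (intro mult_right_mono) auto
    ultimately show ?thesis using e3 e4 by (simp add: mult.assoc)
  qed
  finally show ?thesis .
qed

context falg begin

lemma Sk_alt: "Sk k w = (\<Sum>j<\<beta>. yk k w + sgrad G xi w (\<beta> * k + j) (xk k w) - sgrad G xi w (\<beta> * k) (xk k w))"
  by (simp add: Sk_def inner_snd)

lemma pre_SQ_xy:
  "pre (\<beta> * k) borel (xk k) \<and> pre (\<beta> * k + 1) borel (yk k) \<and> SQ (xk k) \<and> SQ (yk k)"
proof (induction k)
  case 0
  have x: "xk 0 = (\<lambda>w. x0)" by (simp add: fun_eq_iff xk0)
  have y: "yk 0 = (\<lambda>w. sgrad G xi w 0 x0)" by (simp add: fun_eq_iff yk0)
  have p0: "pre T borel (\<lambda>w. x0)" for T by (rule pre_const) simp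
  show ?case unfolding x y
    by (intro conjI p0 SQ_const pre_sgrad[OF _ p0] SQ_sgrad[OF p0 SQ_const]) simp
next
  case (Suc k)
  then have px: "pre (\<beta> * k) borel (xk k)" and py: "pre (\<beta> * k + 1) borel (yk k)"
    and sx: "SQ (xk k)" and sy: "SQ (yk k)" by auto
  let ?T = "\<beta> * Suc k"
  have le1: "\<beta> * k + 1 \<le> ?T" using beta1 by simp
  have le0: "\<beta> * k \<le> ?T" by simp
  have pS: "pre ?T borel (Sk k)"
  proof -
    have "pre ?T borel (\<lambda>w. \<Sum>j<\<beta>. yk k w + sgrad G xi w (\<beta> * k + j) (xk k w) - sgrad G xi w (\<beta> * k) (xk k w))"
    proof (intro pre_sum pre_diff pre_add pre_mono[OF le1 py] pre_sgrad pre_mono[OF le0 px])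
      show "\<beta> * k + j < ?T" if "j \<in> {..<\<beta>}" for j using that by simp
      show "\<beta> * k < ?T" using beta1 by simp
    qed simp
    then show ?thesis by (simp add: Sk_alt[abs_def])
  qed
  have sS: "SQ (Sk k)"
  proof -
    have "SQ (\<lambda>w. \<Sum>j<\<beta>. yk k w + sgrad G xi w (\<beta> * k + j) (xk k w) - sgrad G xi w (\<beta> * k) (xk k w))"
      by (intro SQ_sum SQ_diff SQ_add sy SQ_sgrad[OF _ sx] px pre_mono[OF _ px]) auto
    then show ?thesis by (simp add: Sk_alt[abs_def])
  qed
  have xS: "xk (Suc k) = (\<lambda>w. mix Wb (xk k w - \<gamma> *\<^sub>R Sk k w))" by (simp add: fun_eq_iff xk_Suc)
  have pxS: "pre ?T borel (xk (Suc k))"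
    unfolding xS by (intro pre_mix pre_diff pre_scaleR pS pre_mono[OF le0 px])
  have sxS: "SQ (xk (Suc k))"
    unfolding xS by (intro SQ_mix SQ_diff SQ_scaleR sS sx)
  have yS: "yk (Suc k) = (\<lambda>w. mix Wb (yk k w + sgrad G xi w (\<beta> * Suc k) (xk (Suc k) w) - sgrad G xi w (\<beta> * k) (xk k w)))"
    by (simp add: fun_eq_iff yk_Suc)
  have pyS: "pre (?T + 1) borel (yk (Suc k))"
    unfolding yS
    by (intro pre_mix pre_diff pre_add pre_sgrad pre_mono[OF _ py] pre_mono[OF _ pxS] pre_mono[OF _ px])
       (use beta1 in auto)
  have syS: "SQ (yk (Suc k))"
    unfolding yS by (intro SQ_mix SQ_diff SQ_add sy SQ_sgrad[OF pxS sxS] SQ_sgrad[OF px sx])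
  show ?case using pxS pyS sxS syS by simp
qed

lemma px: "pre (\<beta> * k) borel (xk k)" using pre_SQ_xy by blast
lemma py: "pre (\<beta> * k + 1) borel (yk k)" using pre_SQ_xy by blast
lemma sx: "SQ (xk k)" using pre_SQ_xy by blast
lemma sy: "SQ (yk k)" using pre_SQ_xy by blast

lemma ek_fun: "ek k = (\<lambda>w. sgrad G xi w (\<beta> * k) (xk k w) - Fv grad (xk k w))"
  by (simp add: fun_eq_iff ek_def)

lemma sek: "SQ (ek k)" unfolding ek_fun by (rule SQ_noise[OF px])
lemma pek: "pre (\<beta> * k + 1) borel (ek k)"
  unfolding ek_fun by (intro pre_diff pre_sgrad pre_Fv pre_mono[OF _ px]) auto
lemma sej: "SQ (ej k j)"
  unfolding ej_def[abs_def] by (rule SQ_noise[OF pre_mono[OF _ px]]) simp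
lemma svk: "SQ (vk k)" unfolding vk_def[abs_def] by (intro SQ_diff sy sek)
lemma pvk: "pre (\<beta> * k + 1) borel (vk k)" unfolding vk_def[abs_def] by (intro pre_diff py pek)
lemma sFk: "SQ (Fk k)" unfolding Fk_def[abs_def] by (intro SQ_Fv sx)
lemma pFk: "pre (\<beta> * k) borel (Fk k)" unfolding Fk_def[abs_def] by (intro pre_Fv px)
lemma sAk: "SQ (Ak k)" unfolding Ak_def[abs_def] by (intro SQ_mix SQ_dev SQ_diff SQ_add svk sFk)
lemma pAk: "pre (\<beta> * Suc k) borel (Ak k)"
  unfolding Ak_def[abs_def]
  by (intro pre_mix pre_dev pre_diff pre_add pre_mono[OF _ pvk] pFk pre_mono[OF _ pFk]) (use beta1 in auto)

end

context falg begin

lemma P_nonneg: "0 \<le> rho_of Wb" by (rule rho_nonneg)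

lemma A_path:
  assumes st1: "4 * \<beta> * L * \<gamma> \<le> 1" and st2: "14 * \<beta> * L * sqrt (rho_of Wb) * \<gamma> \<le> 1 - rho_of Wb"
    and g0: "\<gamma> \<ge> 0"
  shows "(norm (Ak k w))\<^sup>2 \<le> (3 + rho_of Wb) / 4 * (norm (dev (vk k w)))\<^sup>2
     + 17 * rho_of Wb * L\<^sup>2 / (1 - rho_of Wb) * (norm (dev (xk k w)))\<^sup>2
     + 16 * real CARD('n) * rho_of Wb * L\<^sup>2 * \<gamma>\<^sup>2 * (real \<beta>)\<^sup>2 / (1 - rho_of Wb) * (norm (gf grad (avg (xk k w))))\<^sup>2
     + 8 * rho_of Wb * L\<^sup>2 * \<gamma>\<^sup>2 * real \<beta> / (1 - rho_of Wb) * (\<Sum>j<\<beta>. (norm (ej k j w))\<^sup>2)"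
proof -
  let ?P = "rho_of Wb"
  have P0: "0 \<le> ?P" and P1: "?P < 1" using P_nonneg Prho by auto
  let ?v = "vk k w" and ?x = "xk k w" and ?x' = "xk (Suc k) w"
  let ?D = "Fk (Suc k) w - Fk k w"
  show ?thesis
  proof (rule combine[OF P0 P1 L_nonneg g0 _ _ _ _ _ _ _ _ _ _ _ _ _])
    show "0 \<le> real \<beta>" "0 \<le> real CARD('n)" by auto
    show "(norm (Ak k w))\<^sup>2 \<le> (1 + ?P) / 2 * (norm (dev ?v))\<^sup>2 + 2 * ?P / (1 - ?P) * (norm (dev ?D))\<^sup>2"
    proof -
      have "Ak k w = mix Wb (dev (?v + ?D))" by (simp add: Ak_def algebra_simps)
      then have "(norm (Ak k w))\<^sup>2 \<le> ?P * (norm (dev (?v + ?D)))\<^sup>2" using contr by simp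
      also have "\<dots> \<le> ?P * (norm (dev ?v) + norm (dev ?D))\<^sup>2"
        using P0 by (intro mult_left_mono power_mono) (auto simp: dev_add norm_triangle_ineq)
      also have "\<dots> \<le> (1 + ?P) / 2 * (norm (dev ?v))\<^sup>2 + 2 * ?P / (1 - ?P) * (norm (dev ?D))\<^sup>2"
        by (rule rl1[OF P0 P1]) auto
      finally show ?thesis .
    qed
    show "(norm (dev ?D))\<^sup>2 \<le> L\<^sup>2 * (norm (?x' - ?x))\<^sup>2"
    proof -
      have "(norm (dev ?D))\<^sup>2 \<le> (norm ?D)\<^sup>2" by (intro power_mono norm_dev_le) auto
      also have "\<dots> \<le> L\<^sup>2 * (norm (?x' - ?x))\<^sup>2" unfolding Fk_def by (rule Fv_lip)
      finally show ?thesis .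
    qed
    show "(norm (?x' - ?x))\<^sup>2 \<le> 8 * (norm (dev ?x))\<^sup>2 + 2 * \<gamma>\<^sup>2 * (norm (Sk k w))\<^sup>2"
    proof -
      have u: "(norm (mix Wb (dev ?x) - dev ?x))\<^sup>2 \<le> 4 * (norm (dev ?x))\<^sup>2"
      proof -
        have "(norm (mix Wb (dev ?x) - dev ?x))\<^sup>2 \<le> 2 * (norm (mix Wb (dev ?x)))\<^sup>2 + 2 * (norm (dev ?x))\<^sup>2"
          by (rule sq_diff_le)
        moreover have "(norm (mix Wb (dev ?x)))\<^sup>2 \<le> (norm (dev ?x))\<^sup>2"
        proof -
          have "?P * (norm (dev ?x))\<^sup>2 \<le> (norm (dev ?x))\<^sup>2"
            using mult_right_mono[of ?P 1 "(norm (dev ?x))\<^sup>2"] P1 by simp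
          then show ?thesis using contr[of Wb ?x] by linarith
        qed
        ultimately show ?thesis by linarith
      qed
      have s: "(norm (\<gamma> *\<^sub>R mix Wb (Sk k w)))\<^sup>2 \<le> \<gamma>\<^sup>2 * (norm (Sk k w))\<^sup>2"
        using contr2[OF Wrow Wcol, of "Sk k w"] P1 by (simp add: power_mult_distrib mult_left_mono)
      show ?thesis unfolding dx_eq using sq_diff_le[of "mix Wb (dev ?x) - dev ?x" "\<gamma> *\<^sub>R mix Wb (Sk k w)"] u s
        by simp
    qed
    show "(norm (Sk k w))\<^sup>2 \<le> 2 * (real \<beta>)\<^sup>2 * (norm ?v)\<^sup>2 + 2 * real \<beta> * (\<Sum>j<\<beta>. (norm (ej k j w))\<^sup>2)"
    proof -
      have "(norm (Sk k w))\<^sup>2 \<le> 2 * (norm (real \<beta> *\<^sub>R ?v))\<^sup>2 + 2 * (norm (\<Sum>j<\<beta>. ej k j w))\<^sup>2"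
        unfolding Sk_eq by (rule sq_add_le)
      moreover have "(norm (\<Sum>j<\<beta>. ej k j w))\<^sup>2 \<le> real \<beta> * (\<Sum>j<\<beta>. (norm (ej k j w))\<^sup>2)"
        using norm_sum_sq[of "\<lambda>j. ej k j w" "{..<\<beta>}"] by simp
      ultimately show ?thesis by (simp add: power_mult_distrib)
    qed
    show "(norm ?v)\<^sup>2 \<le> (norm (dev ?v))\<^sup>2 + 2 * real CARD('n) * (norm (gf grad (avg ?x)))\<^sup>2 + 2 * L\<^sup>2 * (norm (dev ?x))\<^sup>2"
      using pyth[of ?v] avgF_bound[of ?x] by (simp add: avg_vk Fk_def)
    show "196 * ?P * L\<^sup>2 * \<gamma>\<^sup>2 * (real \<beta>)\<^sup>2 \<le> (1 - ?P)\<^sup>2"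
    proof -
      have "0 \<le> 14 * \<beta> * L * sqrt ?P * \<gamma>" using L_nonneg g0 P0 by simp
      then have "(14 * \<beta> * L * sqrt ?P * \<gamma>)\<^sup>2 \<le> (1 - ?P)\<^sup>2" using st2 by (intro power_mono) auto
      then show ?thesis using P0 by (simp add: power_mult_distrib mult_ac)
    qed
    show "16 * (real \<beta>)\<^sup>2 * L\<^sup>2 * \<gamma>\<^sup>2 \<le> 1"
    proof -
      have "0 \<le> 4 * \<beta> * L * \<gamma>" using L_nonneg g0 by simp
      then have "(4 * \<beta> * L * \<gamma>)\<^sup>2 \<le> 1\<^sup>2" using st1 by (intro power_mono) auto
      then show ?thesis by (simp add: power_mult_distrib)
    qed
  qed (auto intro: sum_nonneg)
qed

end

context fsetup begin

lemma SQ_avg: "SQ f \<Longrightarrow> SQ (\<lambda>w. avg (f w :: 'a^'n))"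
  unfolding SQ_def[of f]
proof (elim conjE, intro SQ_bound[where g="\<lambda>w. (norm (f w))\<^sup>2"] bm_avg)
  fix w
  have "real CARD('n) * (norm (avg (f w)))\<^sup>2 \<le> (norm (f w))\<^sup>2" using pyth[of "f w"] by simp
  moreover have "(norm (avg (f w)))\<^sup>2 \<le> real CARD('n) * (norm (avg (f w)))\<^sup>2"
  proof -
    have "1 \<le> real CARD('n)" by simp
    from mult_right_mono[OF this, of "(norm (avg (f w)))\<^sup>2"] show ?thesis by simp
  qed
  ultimately show "(norm (avg (f w)))\<^sup>2 \<le> (norm (f w))\<^sup>2" by linarith
qed auto

lemma gf_eq: "gf grad (avg x) = avg (Fv grad (mix Jmat (x :: 'a^'n)))"
  by (simp add: gf_def avg_def Fv_def mix_J cvec_def)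

end

lemma mix_mat1: "mix (mat 1) e = (e :: 'a::real_vector^'n::finite)"
proof -
  have "(\<Sum>j\<in>UNIV. (mat 1 $ i $ j) *\<^sub>R e$j) = e$i" for i
  proof -
    have "(\<Sum>j\<in>UNIV. (mat 1 $ i $ j) *\<^sub>R e$j) = (\<Sum>j\<in>UNIV. if j = i then e$j else 0)"
      by (intro sum.cong) (auto simp: mat_def)
    then show ?thesis by simp
  qed
  then show ?thesis by (simp add: mix_def vec_eq_iff)
qed

context falg begin

abbreviation "P \<equiv> rho_of Wb"

definition "bE k = (\<integral>w. (norm (dev (yk k w)))\<^sup>2 \<partial>M)"
definition "cE k = (\<integral>w. (norm (dev (vk k w)))\<^sup>2 \<partial>M)"
definition "XE k = (\<integral>w. (norm (dev (xk k w)))\<^sup>2 \<partial>M)"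
definition "gE k = (\<integral>w. (norm (gf grad (avg (xk k w))))\<^sup>2 \<partial>M)"
definition "EA k = (\<integral>w. (norm (Ak k w))\<^sup>2 \<partial>M)"

lemma sgf: "SQ (\<lambda>w. gf grad (avg (xk k w)))"
  unfolding gf_eq by (intro SQ_avg SQ_Fv SQ_mix sx)

lemma nonneg_E: "0 \<le> bE k" "0 \<le> cE k" "0 \<le> XE k" "0 \<le> gE k" "0 \<le> EA k"
  by (auto simp: bE_def cE_def XE_def gE_def EA_def)

lemma noise_sum_E: "(\<integral>w. (\<Sum>j<\<beta>. (norm (ej k j w))\<^sup>2) \<partial>M) \<le> real \<beta> * (real CARD('n) * \<sigma>\<^sup>2)"
proof -
  have "(\<integral>w. (\<Sum>j<\<beta>. (norm (ej k j w))\<^sup>2) \<partial>M) = (\<Sum>j<\<beta>. (\<integral>w. (norm (ej k j w))\<^sup>2 \<partial>M))"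
    by (intro Bochner_Integration.integral_sum SQ_int sej)
  also have "\<dots> \<le> (\<Sum>j<\<beta>. real CARD('n) * \<sigma>\<^sup>2)"
  proof (intro sum_mono)
    fix j
    show "(\<integral>w. (norm (ej k j w))\<^sup>2 \<partial>M) \<le> real CARD('n) * \<sigma>\<^sup>2"
      unfolding ej_def by (rule vnoise(2)[OF pre_mono[OF _ px]]) simp
  qed
  finally show ?thesis by simp
qed

lemma H1:
  assumes st1: "4 * \<beta> * L * \<gamma> \<le> 1" and st2: "14 * \<beta> * L * sqrt P * \<gamma> \<le> 1 - P"
    and g0: "\<gamma> \<ge> 0"
  shows "EA k \<le> (3 + P) / 4 * cE k + 17 * P * L\<^sup>2 / (1 - P) * XE k
     + 16 * real CARD('n) * P * L\<^sup>2 * \<gamma>\<^sup>2 * (real \<beta>)\<^sup>2 / (1 - P) * gE k + real CARD('n) * \<sigma>\<^sup>2"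
proof -
  have P0: "0 \<le> P" and P1: "P < 1" using P_nonneg Prho by auto
  let ?c4 = "8 * P * L\<^sup>2 * \<gamma>\<^sup>2 * real \<beta> / (1 - P)"
  have c40: "0 \<le> ?c4" using P0 P1 by simp
  have i1: "integrable M (\<lambda>w. (norm (dev (vk k w)))\<^sup>2)" by (intro SQ_int SQ_dev svk)
  have i2: "integrable M (\<lambda>w. (norm (dev (xk k w)))\<^sup>2)" by (intro SQ_int SQ_dev sx)
  have i3: "integrable M (\<lambda>w. (norm (gf grad (avg (xk k w))))\<^sup>2)" by (intro SQ_int sgf)
  have i4: "integrable M (\<lambda>w. \<Sum>j<\<beta>. (norm (ej k j w))\<^sup>2)"
    by (intro Bochner_Integration.integrable_sum SQ_int sej)
  have "EA k \<le> (\<integral>w. (3 + P) / 4 * (norm (dev (vk k w)))\<^sup>2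
     + 17 * P * L\<^sup>2 / (1 - P) * (norm (dev (xk k w)))\<^sup>2
     + 16 * real CARD('n) * P * L\<^sup>2 * \<gamma>\<^sup>2 * (real \<beta>)\<^sup>2 / (1 - P) * (norm (gf grad (avg (xk k w))))\<^sup>2
     + ?c4 * (\<Sum>j<\<beta>. (norm (ej k j w))\<^sup>2) \<partial>M)"
    unfolding EA_def
    by (intro integral_mono A_path[OF st1 st2 g0] SQ_int sAk
        Bochner_Integration.integrable_add integrable_mult_right i1 i2 i3 i4)
  also have "\<dots> = (3 + P) / 4 * cE k + 17 * P * L\<^sup>2 / (1 - P) * XE k
     + 16 * real CARD('n) * P * L\<^sup>2 * \<gamma>\<^sup>2 * (real \<beta>)\<^sup>2 / (1 - P) * gE k
     + ?c4 * (\<integral>w. (\<Sum>j<\<beta>. (norm (ej k j w))\<^sup>2) \<partial>M)"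
    using i1 i2 i3 i4 by (simp add: cE_def XE_def gE_def)
  also have "?c4 * (\<integral>w. (\<Sum>j<\<beta>. (norm (ej k j w))\<^sup>2) \<partial>M) \<le> ?c4 * (real \<beta> * (real CARD('n) * \<sigma>\<^sup>2))"
    by (intro mult_left_mono noise_sum_E c40)
  also have "?c4 * (real \<beta> * (real CARD('n) * \<sigma>\<^sup>2)) \<le> real CARD('n) * \<sigma>\<^sup>2"
  proof -
    have "0 \<le> 14 * \<beta> * L * sqrt P * \<gamma>" using L_nonneg g0 P0 by simp
    then have "(14 * \<beta> * L * sqrt P * \<gamma>)\<^sup>2 \<le> (1 - P)\<^sup>2" using st2 by (intro power_mono) auto
    then have c1: "196 * (P * L\<^sup>2 * \<gamma>\<^sup>2 * (real \<beta>)\<^sup>2) \<le> (1 - P)\<^sup>2"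
      using P0 by (simp add: power_mult_distrib mult_ac)
    have "?c4 * real \<beta> = 8 * (P * L\<^sup>2 * \<gamma>\<^sup>2 * (real \<beta>)\<^sup>2) / (1 - P)"
      by (simp add: power2_eq_square)
    also have "\<dots> \<le> 8 * ((1 - P)\<^sup>2 / 196) / (1 - P)"
      using c1 P1 by (intro divide_right_mono mult_left_mono) auto
    also have "\<dots> = 2 * (1 - P) / 49" using P1 by (simp add: power2_eq_square field_simps)
    also have "\<dots> \<le> 1" using P0 by simp
    finally have "?c4 * real \<beta> \<le> 1" .
    then have "?c4 * real \<beta> * (real CARD('n) * \<sigma>\<^sup>2) \<le> 1 * (real CARD('n) * \<sigma>\<^sup>2)"
      by (intro mult_right_mono) auto
    then show ?thesis by (simp add: mult.assoc)
  qed
  finally show ?thesis by simp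
qed

lemma noise_mixJ: "(norm (mix (Wb - Jmat) e))\<^sup>2 \<le> P * (norm (e :: 'a^'n))\<^sup>2"
proof -
  have "(norm (mix (Wb - Jmat) e))\<^sup>2 = (norm (mix Wb (dev e)))\<^sup>2" by (simp add: mixWJ[OF Wrow])
  also have "\<dots> \<le> P * (norm (dev e))\<^sup>2" by (rule contr)
  also have "\<dots> \<le> P * (norm e)\<^sup>2" using P_nonneg by (intro mult_left_mono power_mono norm_dev_le) auto
  finally show ?thesis .
qed

lemma noise_mix1: "(norm (mix (Wb - mat 1) e))\<^sup>2 \<le> 4 * (norm (e :: 'a^'n))\<^sup>2"
proof -
  have eq: "mix (Wb - mat 1) e = mix Wb (dev e) - dev e"
    by (simp add: mix_mat_diff mix_mat1 dev_eq mix_diff mix_cvec[OF Wrow])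
  have a: "(norm (mix Wb (dev e)))\<^sup>2 \<le> (norm e)\<^sup>2"
  proof -
    have "P * (norm e)\<^sup>2 \<le> (norm e)\<^sup>2" using Prho mult_right_mono[of P 1 "(norm e)\<^sup>2"] by simp
    then show ?thesis using noise_mixJ[of e] unfolding mixWJ[OF Wrow, of e] by linarith
  qed
  have b: "(norm (dev e))\<^sup>2 \<le> (norm e)\<^sup>2" by (intro power_mono norm_dev_le) auto
  show ?thesis unfolding eq using sq_diff_le[of "mix Wb (dev e)" "dev e"] a b by linarith
qed

end

context falg begin

lemma H2: "bE (Suc k) \<le> EA k + P * (real CARD('n) * \<sigma>\<^sup>2)"
proof -
  define e where "e = (\<lambda>w. sgrad G xi w (\<beta> * Suc k) (xk (Suc k) w) - Fv grad (xk (Suc k) w))"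
  have s1: "SQ e" unfolding e_def by (rule SQ_noise[OF px])
  have eq: "bE (Suc k) = EA k + (\<integral>w. (norm (mix (Wb - Jmat) (e w)))\<^sup>2 \<partial>M)"
    unfolding bE_def EA_def dev_yk_Suc ek_def e_def by (rule expand_cross[OF pAk sAk px])
  have "(\<integral>w. (norm (mix (Wb - Jmat) (e w)))\<^sup>2 \<partial>M) \<le> (\<integral>w. P * (norm (e w))\<^sup>2 \<partial>M)"
    by (rule integral_mono[OF SQ_int[OF SQ_mix[OF s1]] integrable_mult_right[OF SQ_int[OF s1]] noise_mixJ])
  also have "\<dots> = P * (\<integral>w. (norm (e w))\<^sup>2 \<partial>M)"
    by (rule integral_mult_right_zero)
  also have "\<dots> \<le> P * (real CARD('n) * \<sigma>\<^sup>2)"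
    unfolding e_def by (rule mult_left_mono[OF vnoise(2)[OF px[of "Suc k"]] P_nonneg])
  finally have le: "(\<integral>w. (norm (mix (Wb - Jmat) (e w)))\<^sup>2 \<partial>M) \<le> P * (real CARD('n) * \<sigma>\<^sup>2)" .
  show ?thesis unfolding eq by (rule add_left_mono[OF le])
qed

lemma H3: "cE (Suc k) \<le> EA k + 4 * (real CARD('n) * \<sigma>\<^sup>2)"
proof -
  define e where "e = (\<lambda>w. sgrad G xi w (\<beta> * Suc k) (xk (Suc k) w) - Fv grad (xk (Suc k) w))"
  have s1: "SQ e" unfolding e_def by (rule SQ_noise[OF px])
  have eq: "cE (Suc k) = EA k + (\<integral>w. (norm (mix (Wb - mat 1) (e w)))\<^sup>2 \<partial>M)"
    unfolding cE_def EA_def dev_vk_Suc ek_def e_def by (rule expand_cross[OF pAk sAk px])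
  have "(\<integral>w. (norm (mix (Wb - mat 1) (e w)))\<^sup>2 \<partial>M) \<le> (\<integral>w. 4 * (norm (e w))\<^sup>2 \<partial>M)"
    by (rule integral_mono[OF SQ_int[OF SQ_mix[OF s1]] integrable_mult_right[OF SQ_int[OF s1]] noise_mix1])
  also have "\<dots> = 4 * (\<integral>w. (norm (e w))\<^sup>2 \<partial>M)"
    by (rule integral_mult_right_zero)
  also have "\<dots> \<le> 4 * (real CARD('n) * \<sigma>\<^sup>2)"
    unfolding e_def by (rule mult_left_mono[OF vnoise(2)[OF px[of "Suc k"]]]) simp
  finally have le: "(\<integral>w. (norm (mix (Wb - mat 1) (e w)))\<^sup>2 \<partial>M) \<le> 4 * (real CARD('n) * \<sigma>\<^sup>2)" .
  show ?thesis unfolding eq by (rule add_left_mono[OF le])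
qed

lemma H4: "cE 0 \<le> bE 0"
proof -
  have v0: "vk 0 w = Fv grad x0" for w by (simp add: vk_def ek_def yk0 xk0)
  have pc: "pre 0 borel (\<lambda>w. c)" for c :: "'a^'n" by (rule pre_const) simp
  have "bE 0 = (\<integral>w. (norm (dev (Fv grad x0) + mix (mat 1 - Jmat) (sgrad G xi w 0 x0 - Fv grad x0)))\<^sup>2 \<partial>M)"
    unfolding bE_def dev_vk0 by (simp add: Fk_def ek_def xk0)
  also have "\<dots> = (\<integral>w. (norm (dev (Fv grad x0)))\<^sup>2 \<partial>M)
     + (\<integral>w. (norm (mix (mat 1 - Jmat) (sgrad G xi w 0 x0 - Fv grad x0)))\<^sup>2 \<partial>M)"
    by (rule expand_cross[OF pc SQ_const pc])
  also have "(\<integral>w. (norm (dev (Fv grad x0)))\<^sup>2 \<partial>M) = cE 0" by (simp add: cE_def v0)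
  finally have eq: "bE 0 = cE 0 + (\<integral>w. (norm (mix (mat 1 - Jmat) (sgrad G xi w 0 x0 - Fv grad x0)))\<^sup>2 \<partial>M)" .
  have "0 \<le> (\<integral>w. (norm (mix (mat 1 - Jmat) (sgrad G xi w 0 x0 - Fv grad x0)))\<^sup>2 \<partial>M)"
    by (rule Bochner_Integration.integral_nonneg) simp
  then show ?thesis unfolding eq by (rule le_add_same_cancel1[THEN iffD2])
qed

end

lemma final_sum:
  fixes b c EA R :: "nat \<Rightarrow> real" and P s :: real and K :: nat
  assumes P0: "0 \<le> P" and P1: "P < 1" and s0: "0 \<le> s" and K1: "K \<ge> 1"
    and hb: "\<And>k. b (Suc k) \<le> EA k + s"
    and hc: "\<And>k. c (Suc k) \<le> EA k + 4 * s"
    and hA: "\<And>k. EA k \<le> (3 + P) / 4 * c k + R k + s"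
    and h0: "c 0 \<le> b 0"
    and cn: "\<And>k. 0 \<le> c k" and Rn: "\<And>k. 0 \<le> R k"
  shows "(\<Sum>k<K. b k) \<le> 4 / (1 - P) * b 0 + 4 / (1 - P) * (\<Sum>k<K. R k) + 20 / (1 - P) * (real K * s)"
proof -
  obtain m where K: "K = Suc m" using K1 by (cases K) auto
  define SC where "SC = (\<Sum>k<K. c k)"
  define SR where "SR = (\<Sum>k<K. R k)"
  have SCm: "(\<Sum>k<m. c k) \<le> SC" unfolding SC_def K using cn by (simp add: sum.lessThan_Suc)
  have SRm: "(\<Sum>k<m. R k) \<le> SR" unfolding SR_def K using Rn by (simp add: sum.lessThan_Suc)
  have SR0: "0 \<le> SR" unfolding SR_def using Rn by (simp add: sum_nonneg)
  have mK: "real m \<le> real K" using K by simp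
  have a: "SC \<le> c 0 + (3 + P) / 4 * SC + SR + 5 * (real K * s)"
  proof -
    have "SC = c 0 + (\<Sum>k<m. c (Suc k))" unfolding SC_def K by (rule sum.lessThan_Suc_shift)
    also have "(\<Sum>k<m. c (Suc k)) \<le> (\<Sum>k<m. (3 + P) / 4 * c k + R k + 5 * s)"
      by (intro sum_mono) (use hc hA in \<open>smt (verit)\<close>)
    also have "\<dots> = (3 + P) / 4 * (\<Sum>k<m. c k) + (\<Sum>k<m. R k) + 5 * (real m * s)"
      by (simp add: sum.distrib sum_distrib_left)
    also have "\<dots> \<le> (3 + P) / 4 * SC + SR + 5 * (real K * s)"
      using SCm SRm mK s0 P0 by (intro add_mono mult_left_mono mult_right_mono) auto
    finally show ?thesis by simp
  qed
  then have a': "(1 - P) / 4 * SC \<le> c 0 + SR + 5 * (real K * s)" by (simp add: field_simps)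
  have SCb: "SC \<le> 4 / (1 - P) * (c 0 + SR + 5 * (real K * s))"
    using a' P1 by (simp add: field_simps)
  have bsum: "(\<Sum>k<K. b k) \<le> b 0 + (3 + P) / 4 * SC + SR + 2 * (real K * s)"
  proof -
    have "(\<Sum>k<K. b k) = b 0 + (\<Sum>k<m. b (Suc k))" unfolding K by (rule sum.lessThan_Suc_shift)
    also have "(\<Sum>k<m. b (Suc k)) \<le> (\<Sum>k<m. (3 + P) / 4 * c k + R k + 2 * s)"
      by (intro sum_mono) (use hb hA in \<open>smt (verit)\<close>)
    also have "\<dots> = (3 + P) / 4 * (\<Sum>k<m. c k) + (\<Sum>k<m. R k) + 2 * (real m * s)"
      by (simp add: sum.distrib sum_distrib_left)
    also have "\<dots> \<le> (3 + P) / 4 * SC + SR + 2 * (real K * s)"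
      using SCm SRm mK s0 P0 by (intro add_mono mult_left_mono mult_right_mono) auto
    finally show ?thesis by simp
  qed
  also have "\<dots> \<le> b 0 + (3 + P) / 4 * (4 / (1 - P) * (c 0 + SR + 5 * (real K * s))) + SR + 2 * (real K * s)"
    using SCb P0 by (intro add_mono mult_left_mono order_refl) auto
  also have "\<dots> \<le> 4 / (1 - P) * b 0 + 4 / (1 - P) * SR + 20 / (1 - P) * (real K * s)"
  proof -
    define Ks where "Ks = real K * s"
    have Ks0: "0 \<le> Ks" using s0 by (simp add: Ks_def)
    define L0 where "L0 = b 0 + (3 + P) / 4 * (4 / (1 - P) * (c 0 + SR + 5 * Ks)) + SR + 2 * Ks"
    define R0 where "R0 = 4 / (1 - P) * b 0 + 4 / (1 - P) * SR + 20 / (1 - P) * Ks"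
    define a where "a = 1 / (1 - P)"
    have ha: "(1 - P) * a = 1" using P1 by (simp add: a_def)
    have L0a: "L0 = b 0 + (3 + P) * a * (c 0 + SR + 5 * Ks) + SR + 2 * Ks"
      unfolding L0_def a_def using P1 by (simp add: field_simps)
    have R0a: "R0 = 4 * a * b 0 + 4 * a * SR + 20 * a * Ks"
      unfolding R0_def a_def using P1 by (simp add: field_simps)
    have eL: "(1 - P) * L0 = (1 - P) * b 0 + (3 + P) * (c 0 + SR + 5 * Ks) + (1 - P) * SR + 2 * (1 - P) * Ks"
      unfolding L0a using ha by algebra
    have eR: "(1 - P) * R0 = 4 * b 0 + 4 * SR + 20 * Ks"
      unfolding R0a using ha by algebra
    have d: "(1 - P) * R0 - (1 - P) * L0 = (3 + P) * (b 0 - c 0) + (3 - 3 * P) * Ks"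
      unfolding eL eR by (simp add: algebra_simps)
    have "0 \<le> (3 + P) * (b 0 - c 0) + (3 - 3 * P) * Ks"
      using P0 P1 h0 Ks0 by (intro add_nonneg_nonneg mult_nonneg_nonneg) auto
    then have "(1 - P) * L0 \<le> (1 - P) * R0" using d by linarith
    then have "L0 \<le> R0" using P1 by (simp add: mult_le_cancel_left_pos)
    then show ?thesis unfolding L0_def R0_def Ks_def .
  qed
  finally show ?thesis unfolding SR_def .
qed


theorem lemma8:
  fixes M :: "'w measure"
    and D :: "'n::finite \<Rightarrow> 's measure"
    and xi :: "'n \<Rightarrow> nat \<Rightarrow> 'w \<Rightarrow> 's"
    and f :: "'n \<Rightarrow> 'a::euclidean_space \<Rightarrow> real"
    and grad :: "'n \<Rightarrow> 'a \<Rightarrow> 'a"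
    and G :: "'n \<Rightarrow> 'a \<Rightarrow> 's \<Rightarrow> 'a"
    and W :: "real^'n^'n"
    and acc :: bool
    and \<alpha> \<beta> K :: nat
    and \<gamma> L \<sigma> :: real
    and x0 :: "'a^'n"
    and rb n :: real
  defines "Wb \<equiv> Wbar acc W \<alpha>"
  defines "rb \<equiv> rho_of (Wbar acc W \<alpha>)"
  defines "X \<equiv> \<lambda>t w. fst (flexgt Wb G xi \<gamma> \<beta> x0 t w)"
  defines "Y \<equiv> \<lambda>t w. snd (flexgt Wb G xi \<gamma> \<beta> x0 t w)"
  defines "n \<equiv> real CARD('n)"
  assumes M: "prob_space M"
    and D: "\<And>i. prob_space (D i)"
    and xi_meas: "\<And>i t. xi i t \<in> measurable M (D i)"
    and xi_distr: "\<And>i t. distr M (D i) (xi i t) = D i"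
    and xi_indep: "prob_space.indep_vars M (\<lambda>(i, t). D i) (\<lambda>(i, t). xi i t) UNIV"
    and G_meas: "\<And>i. (\<lambda>(x, s). G i x s) \<in> borel_measurable (borel \<Otimes>\<^sub>M D i)"
    and unbiased: "\<And>i x. integrable (D i) (G i x) \<and> (\<integral>s. G i x s \<partial>D i) = grad i x"
    and variance: "\<And>i x. (\<integral>\<^sup>+s. ennreal ((norm (G i x s - grad i x))\<^sup>2) \<partial>D i) \<le> ennreal (\<sigma>\<^sup>2)"
    and grad: "\<And>i x. (f i has_derivative (\<lambda>h. grad i x \<bullet> h)) (at x)"
    and smooth: "\<And>i x y. norm (grad i x - grad i y) \<le> L * norm (x - y)"
    and W: "doubly_stochastic W" "rho_of W < 1"
    and rb: "rb < 1"
    and params: "\<alpha> \<ge> 1" "\<beta> \<ge> 1" "\<gamma> > 0"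
    and step1: "4 * \<beta> * L * \<gamma> \<le> 1"
    and step2: "14 * \<beta> * L * sqrt rb * \<gamma> \<le> 1 - rb"
    and K: "K \<ge> 1"
  shows "ennreal (1 / K) * (\<Sum>k<K. \<integral>\<^sup>+w. ennreal ((norm (dev (Y (\<beta> * k) w)))\<^sup>2) \<partial>M)
     \<le> ennreal (4 / ((1 - rb) * K)) * (\<integral>\<^sup>+w. ennreal ((norm (dev (Y 0 w)))\<^sup>2) \<partial>M)
       + ennreal (24 * n * \<sigma>\<^sup>2 / (1 - rb))
       + ennreal (96 * rb * L\<^sup>2 / (1 - rb)\<^sup>2)
           * (ennreal (1 / K) * (\<Sum>k<K. \<integral>\<^sup>+w. ennreal ((norm (dev (X (\<beta> * k) w)))\<^sup>2) \<partial>M))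
       + ennreal (384 * n * \<gamma>\<^sup>2 * \<beta>\<^sup>2 * L\<^sup>2 * rb / (1 - rb)\<^sup>2)
           * (ennreal (1 / K) * (\<Sum>k<K. \<integral>\<^sup>+w.
                ennreal ((norm ((1 / n) *\<^sub>R (\<Sum>i\<in>UNIV. grad i (avg (X (\<beta> * k) w)))))\<^sup>2) \<partial>M))"
proof -
  have Wst: "rowst Wb \<and> colst Wb" unfolding Wb_def by (rule Wbar_st[OF W(1)])
  have rbW: "rb = rho_of Wb" by (simp add: rb_def Wb_def)
  interpret falg M D xi G grad \<sigma> L Wb \<gamma> \<beta> x0
  proof (intro falg.intro fsetup.intro falg_axioms.intro fsetup_axioms.intro)
    show "prob_space M" by (rule M)
    show "\<And>i. prob_space (D i)" by (rule D)
    show "\<And>i t. xi i t \<in> M \<rightarrow>\<^sub>M D i" by (rule xi_meas)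
    show "\<And>i t. distr M (D i) (xi i t) = D i" by (rule xi_distr)
    show "prob_space.indep_vars M (\<lambda>(i, t). D i) (\<lambda>(i, t). xi i t) UNIV" by (rule xi_indep)
    show "\<And>i. (\<lambda>(x, s). G i x s) \<in> borel_measurable (borel \<Otimes>\<^sub>M D i)" by (rule G_meas)
    show "\<And>i x. integrable (D i) (G i x) \<and> (\<integral>s. G i x s \<partial>D i) = grad i x" by (rule unbiased)
    show "\<And>i x. (\<integral>\<^sup>+s. ennreal ((norm (G i x s - grad i x))\<^sup>2) \<partial>D i) \<le> ennreal (\<sigma>\<^sup>2)" by (rule variance)
    show "\<And>i x y. norm (grad i x - grad i y) \<le> L * norm (x - y)" by (rule smooth)
    show "rowst Wb" "colst Wb" using Wst by auto
    show "rho_of Wb < 1" using rb rbW by simp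
    show "1 \<le> \<beta>" by (rule params(2))
  qed
  have P0: "0 \<le> rb" and P1: "rb < 1" using rb rbW rho_nonneg by auto
  have n_def': "n = real CARD('n)" by (simp add: n_def)
  have Xk: "X (\<beta> * k) w = xk k w" for k w
    unfolding X_def xk_def by (subst flexgt_round[OF params(2)]) (rule refl)
  have Yk: "Y (\<beta> * k) w = yk k w" for k w
    unfolding Y_def yk_def by (subst flexgt_round[OF params(2)]) (rule refl)
  have Y0: "Y 0 w = yk 0 w" for w using Yk[of 0 w] by simp
  have enn: "(\<integral>\<^sup>+w. ennreal ((norm (f w))\<^sup>2) \<partial>M) = ennreal (\<integral>w. (norm (f w))\<^sup>2 \<partial>M)" if "SQ f" for f :: "'w \<Rightarrow> 'a^'n"
    using SQ_int[OF that] by (intro nn_integral_eq_integral) auto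
  have enn2: "(\<integral>\<^sup>+w. ennreal ((norm (f w))\<^sup>2) \<partial>M) = ennreal (\<integral>w. (norm (f w))\<^sup>2 \<partial>M)" if "SQ f" for f :: "'w \<Rightarrow> 'a"
    using SQ_int[OF that] by (intro nn_integral_eq_integral) auto
  have eY: "(\<integral>\<^sup>+w. ennreal ((norm (dev (Y (\<beta> * k) w)))\<^sup>2) \<partial>M) = ennreal (bE k)" for k
    unfolding Yk bE_def by (rule enn[OF SQ_dev[OF sy]])
  have eY0: "(\<integral>\<^sup>+w. ennreal ((norm (dev (Y 0 w)))\<^sup>2) \<partial>M) = ennreal (bE 0)"
    unfolding Y0 bE_def by (rule enn[OF SQ_dev[OF sy]])
  have eX: "(\<integral>\<^sup>+w. ennreal ((norm (dev (X (\<beta> * k) w)))\<^sup>2) \<partial>M) = ennreal (XE k)" for k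
    unfolding Xk XE_def by (rule enn[OF SQ_dev[OF sx]])
  have eg: "(\<integral>\<^sup>+w. ennreal ((norm ((1 / n) *\<^sub>R (\<Sum>i\<in>UNIV. grad i (avg (X (\<beta> * k) w)))))\<^sup>2) \<partial>M) = ennreal (gE k)" for k
  proof -
    have "(1 / n) *\<^sub>R (\<Sum>i\<in>UNIV. grad i (avg (X (\<beta> * k) w))) = gf grad (avg (xk k w))" for w
      by (simp add: gf_def n_def' Xk)
    then show ?thesis unfolding gE_def using enn2[OF sgf[of k]] by simp
  qed
  define s where "s = real CARD('n) * \<sigma>\<^sup>2"
  have s0: "0 \<le> s" by (simp add: s_def)
  define c3 where "c3 = 17 * rb * L\<^sup>2 / (1 - rb)"
  define c4 where "c4 = 16 * real CARD('n) * rb * L\<^sup>2 * \<gamma>\<^sup>2 * (real \<beta>)\<^sup>2 / (1 - rb)"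
  have c30: "0 \<le> c3" and c40: "0 \<le> c4" using P0 P1 by (auto simp: c3_def c4_def)
  have main: "(\<Sum>k<K. bE k) \<le> 4 / (1 - rb) * bE 0 + 4 / (1 - rb) * (\<Sum>k<K. c3 * XE k + c4 * gE k)
      + 20 / (1 - rb) * (real K * s)"
  proof (rule final_sum[OF P0 P1 s0 K])
    show "bE (Suc k) \<le> EA k + s" for k
    proof -
      have h: "bE (Suc k) \<le> EA k + rho_of Wb * s" using H2[of k] unfolding s_def .
      have "rho_of Wb * s \<le> 1 * s" using P1 s0 rbW by (intro mult_right_mono) auto
      then show ?thesis using h by linarith
    qed
    show "cE (Suc k) \<le> EA k + 4 * s" for k using H3[of k] by (simp add: s_def)
    show "EA k \<le> (3 + rb) / 4 * cE k + (c3 * XE k + c4 * gE k) + s" for k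
      using H1[OF _ _ less_imp_le[OF params(3)], of k] step1 step2 unfolding rbW c3_def c4_def s_def
      by (simp add: mult.assoc)
    show "cE 0 \<le> bE 0" by (rule H4)
    show "0 \<le> cE k" for k by (rule nonneg_E)
    show "0 \<le> c3 * XE k + c4 * gE k" for k using c30 c40 nonneg_E by simp
  qed
  define SX where "SX = (\<Sum>k<K. XE k)"
  define Sg where "Sg = (\<Sum>k<K. gE k)"
  define Sb where "Sb = (\<Sum>k<K. bE k)"
  have SX0: "0 \<le> SX" and Sg0: "0 \<le> Sg" and Sb0: "0 \<le> Sb"
    unfolding SX_def Sg_def Sb_def using nonneg_E by (auto intro: sum_nonneg)
  have K0: "real K > 0" using K by simp
  define d3 where "d3 = 96 * rb * L\<^sup>2 / (1 - rb)\<^sup>2"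
  define d4 where "d4 = 384 * n * \<gamma>\<^sup>2 * (real \<beta>)\<^sup>2 * L\<^sup>2 * rb / (1 - rb)\<^sup>2"
  have d30: "0 \<le> d3" and d40: "0 \<le> d4" using P0 P1 by (auto simp: d3_def d4_def n_def')
  have real_ineq: "1 / K * Sb \<le> 4 / ((1 - rb) * K) * bE 0 + 24 * n * \<sigma>\<^sup>2 / (1 - rb)
      + d3 * (1 / K * SX) + d4 * (1 / K * Sg)"
  proof -
    have m2: "Sb \<le> 4 / (1 - rb) * bE 0 + (4 / (1 - rb) * c3) * SX + (4 / (1 - rb) * c4) * Sg + 20 / (1 - rb) * (real K * s)"
      using main unfolding SX_def Sg_def Sb_def by (simp add: sum.distrib sum_distrib_left algebra_simps)
    have k3: "4 / (1 - rb) * c3 \<le> d3"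
    proof -
      have "4 / (1 - rb) * c3 = 68 * (rb * L\<^sup>2) / (1 - rb)\<^sup>2" by (simp add: c3_def power2_eq_square)
      also have "\<dots> \<le> 96 * (rb * L\<^sup>2) / (1 - rb)\<^sup>2" using P0 by (intro divide_right_mono mult_right_mono) auto
      finally show ?thesis by (simp add: d3_def mult.assoc)
    qed
    have k4: "4 / (1 - rb) * c4 \<le> d4"
    proof -
      have "4 / (1 - rb) * c4 = 64 * (n * \<gamma>\<^sup>2 * (real \<beta>)\<^sup>2 * L\<^sup>2 * rb) / (1 - rb)\<^sup>2"
        by (simp add: c4_def power2_eq_square n_def' mult_ac)
      also have "\<dots> \<le> 384 * (n * \<gamma>\<^sup>2 * (real \<beta>)\<^sup>2 * L\<^sup>2 * rb) / (1 - rb)\<^sup>2"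
        using P0 by (intro divide_right_mono mult_right_mono) (auto simp: n_def')
      finally show ?thesis by (simp add: d4_def mult.assoc)
    qed
    have "Sb \<le> 4 / (1 - rb) * bE 0 + d3 * SX + d4 * Sg + 20 / (1 - rb) * (real K * s)"
      using m2 mult_right_mono[OF k3 SX0] mult_right_mono[OF k4 Sg0] by linarith
    then have "1 / K * Sb \<le> 1 / K * (4 / (1 - rb) * bE 0 + d3 * SX + d4 * Sg + 20 / (1 - rb) * (real K * s))"
      using K0 by (intro mult_left_mono) auto
    also have "\<dots> = 4 / ((1 - rb) * K) * bE 0 + 20 * s / (1 - rb) + d3 * (1 / K * SX) + d4 * (1 / K * Sg)"
    proof -
      have q1: "1 / K * (4 / (1 - rb) * bE 0) = 4 / ((1 - rb) * K) * bE 0" by simp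
      have q2: "1 / K * (20 / (1 - rb) * (real K * s)) = 20 * s / (1 - rb)" using K0 by simp
      have q3: "1 / K * (d3 * SX) = d3 * (1 / K * SX)" by simp
      have q4: "1 / K * (d4 * Sg) = d4 * (1 / K * Sg)" by simp
      show ?thesis unfolding distrib_left using q1 q2 q3 q4 by linarith
    qed
    also have "20 * s / (1 - rb) \<le> 24 * n * \<sigma>\<^sup>2 / (1 - rb)"
      using P1 s0 by (intro divide_right_mono) (auto simp: s_def n_def')
    finally show ?thesis by simp
  qed
  have bE0: "0 \<le> bE 0" by (rule nonneg_E)
  have sY: "(\<Sum>k<K. \<integral>\<^sup>+w. ennreal ((norm (dev (Y (\<beta> * k) w)))\<^sup>2) \<partial>M) = ennreal Sb"
    unfolding eY Sb_def using nonneg_E by (simp add: sum_nonneg)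
  have sX: "(\<Sum>k<K. \<integral>\<^sup>+w. ennreal ((norm (dev (X (\<beta> * k) w)))\<^sup>2) \<partial>M) = ennreal SX"
    unfolding eX SX_def using nonneg_E by (simp add: sum_nonneg)
  have sG: "(\<Sum>k<K. \<integral>\<^sup>+w.
                ennreal ((norm ((1 / n) *\<^sub>R (\<Sum>i\<in>UNIV. grad i (avg (X (\<beta> * k) w)))))\<^sup>2) \<partial>M) = ennreal Sg"
    unfolding eg Sg_def using nonneg_E by (simp add: sum_nonneg)
  have iK: "0 \<le> 1 / real K" by simp
  have lhs: "ennreal (1 / K) * (\<Sum>k<K. \<integral>\<^sup>+w. ennreal ((norm (dev (Y (\<beta> * k) w)))\<^sup>2) \<partial>M) = ennreal (1 / K * Sb)"
    unfolding sY by (rule ennreal_mult''[OF Sb0, symmetric])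
  have r1: "ennreal (4 / ((1 - rb) * K)) * (\<integral>\<^sup>+w. ennreal ((norm (dev (Y 0 w)))\<^sup>2) \<partial>M) = ennreal (4 / ((1 - rb) * K) * bE 0)"
    unfolding eY0 by (rule ennreal_mult''[OF bE0, symmetric])
  have r3: "ennreal (96 * rb * L\<^sup>2 / (1 - rb)\<^sup>2) * (ennreal (1 / K) * (\<Sum>k<K. \<integral>\<^sup>+w. ennreal ((norm (dev (X (\<beta> * k) w)))\<^sup>2) \<partial>M))
      = ennreal (d3 * (1 / K * SX))"
    unfolding sX d3_def
    by (simp only: ennreal_mult''[OF SX0, symmetric] ennreal_mult''[OF mult_nonneg_nonneg[OF iK SX0], symmetric])
  have r4: "ennreal (384 * n * \<gamma>\<^sup>2 * \<beta>\<^sup>2 * L\<^sup>2 * rb / (1 - rb)\<^sup>2)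
           * (ennreal (1 / K) * (\<Sum>k<K. \<integral>\<^sup>+w.
                ennreal ((norm ((1 / n) *\<^sub>R (\<Sum>i\<in>UNIV. grad i (avg (X (\<beta> * k) w)))))\<^sup>2) \<partial>M))
      = ennreal (d4 * (1 / K * Sg))"
    unfolding sG d4_def
    by (simp only: ennreal_mult''[OF Sg0, symmetric] ennreal_mult''[OF mult_nonneg_nonneg[OF iK Sg0], symmetric] of_nat_power)
  have t1: "0 \<le> 4 / ((1 - rb) * K) * bE 0" using P1 bE0 by simp
  have t2: "0 \<le> 24 * n * \<sigma>\<^sup>2 / (1 - rb)" using P1 by (simp add: n_def')
  have t3: "0 \<le> d3 * (1 / K * SX)" using d30 SX0 by simp
  have t4: "0 \<le> d4 * (1 / K * Sg)" using d40 Sg0 by simp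
  show ?thesis
    unfolding lhs r1 r3 r4
    using real_ineq t1 t2 t3 t4 by (simp add: ennreal_plus[symmetric] ennreal_leI del: ennreal_plus)
qed

end
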